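(* Let $n\ge3$, $B$ the closed unit disc, and let $X\in C^3(B,\mathbb R^n)$ be a conformally parametrized ($X_u\cdot X_u=W=X_v\cdot X_v$, $X_u\cdot X_v=0$) minimal immersion with flat normal bundle, i.e. there is a $C^2$ orthonormal normal section $\{N_1,\dots,N_{n-2}\}$ whose torsion coefficients all vanish. Assume $X$ is stable: for every $C^2$ unit normal field $N$ along $X$ and every $\varphi\in C_0^\infty(B,\mathbb R)$, $\frac{d^2}{d\varepsilon^2}\mathcal A[X+\varepsilon\varphi N]\big|_{\varepsilon=0}\ge0$, where $\mathcal A[Y]=\iint_B\sqrt{\det(Y_{u^i}\cdot Y_{u^j})}\,dudv$. Let $K$ be the Gaussian curvature of $X$. Then for every $\mu$ with $0<\mu\le\frac{2}{n-2}$, $$\iint_B|\nabla\varphi|^2\,dudv\ge\mu\iint_B(-K)W\varphi^2\,dudv\quad\text{for all }\varphi\in C_0^\infty(B,\mathbb R).$$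
   Context: Orthonormal normal section: $N_\sigma\in C^2(B,\mathbb R^n)$ with $X_{u^i}\cdot N_\sigma=0$, $N_\sigma\cdot N_\omega=\delta_{\sigma\omega}$; torsion coefficients $T^\omega_{\sigma,i}=N_{\sigma,u^i}\cdot N_\omega$ ($\sigma\ne\omega$). With $L_{\sigma,ij}=X_{u^iu^j}\cdot N_\sigma$: minimal means $L_{\sigma,11}+L_{\sigma,22}=0$ for all $\sigma$; $K:=\sum_\sigma(L_{\sigma,11}L_{\sigma,22}-L_{\sigma,12}^2)/W^2$ (independent of the section), and $K\le0$ for minimal $X$. *)

theory Defs
  imports "HOL-Analysis.Analysis"
begin

text \<open>Parameter domain: points of the plane are vectors in real^2, with
  coordinates u^1 = p$1, u^2 = p$2. The closed unit disc is cball 0 1.\<close>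

definition Bdisc :: "(real^2) set" where
  "Bdisc = cball 0 1"

definition pd :: "(real^2 \<Rightarrow> 'a::real_normed_vector) \<Rightarrow> 2 \<Rightarrow> real^2 \<Rightarrow> 'a" where
  "pd f i p = vector_derivative (\<lambda>t. f (p + t *\<^sub>R axis i 1)) (at 0)"

text \<open>Partial derivative on the closed set S, extended to the boundary by continuity
  (limit of interior values).\<close>
definition pdB :: "(real^2) set \<Rightarrow> (real^2 \<Rightarrow> 'a::real_normed_vector) \<Rightarrow> 2 \<Rightarrow> real^2 \<Rightarrow> 'a" where
  "pdB S f i p = Lim (at p within interior S) (pd f i)"

fun Ck :: "nat \<Rightarrow> (real^2) set \<Rightarrow> (real^2 \<Rightarrow> 'a::real_normed_vector) \<Rightarrow> bool" where
  "Ck 0 S f = continuous_on S f"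
| "Ck (Suc k) S f = (continuous_on S f \<and>
     (\<exists>g :: 2 \<Rightarrow> real^2 \<Rightarrow> 'a. (\<forall>i. Ck k S (g i)) \<and>
        (\<forall>p\<in>interior S. \<forall>i. ((\<lambda>t. f (p + t *\<^sub>R axis i 1)) has_vector_derivative g i p) (at 0))))"

definition C0inf :: "(real^2 \<Rightarrow> real) \<Rightarrow> bool" where
  "C0inf \<phi> \<longleftrightarrow> (\<forall>k. Ck k UNIV \<phi>) \<and> compact (closure {p. \<phi> p \<noteq> 0})
      \<and> closure {p. \<phi> p \<noteq> 0} \<subseteq> ball 0 1"

definition gradsq :: "(real^2 \<Rightarrow> real) \<Rightarrow> real^2 \<Rightarrow> real" where
  "gradsq \<phi> p = (pd \<phi> 1 p)\<^sup>2 + (pd \<phi> 2 p)\<^sup>2"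

definition area :: "(real^2 \<Rightarrow> real^'n) \<Rightarrow> real" where
  "area Y = integral Bdisc (\<lambda>p. sqrt ((pd Y 1 p \<bullet> pd Y 1 p) * (pd Y 2 p \<bullet> pd Y 2 p)
                                       - (pd Y 1 p \<bullet> pd Y 2 p)\<^sup>2))"

text \<open>W = X_u . X_u (area element of a conformal parametrization).\<close>
definition Wf :: "(real^2 \<Rightarrow> real^'n) \<Rightarrow> real^2 \<Rightarrow> real" where
  "Wf X p = pd X 1 p \<bullet> pd X 1 p"

definition conformal_immersion :: "(real^2 \<Rightarrow> real^'n) \<Rightarrow> bool" where
  "conformal_immersion X \<longleftrightarrow> (\<forall>p\<in>Bdisc.
      pdB Bdisc X 1 p \<bullet> pdB Bdisc X 1 p = pdB Bdisc X 2 p \<bullet> pdB Bdisc X 2 p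
    \<and> pdB Bdisc X 1 p \<bullet> pdB Bdisc X 2 p = 0
    \<and> pdB Bdisc X 1 p \<bullet> pdB Bdisc X 1 p > 0)"

text \<open>Orthonormal normal section N_0, ..., N_{n-3} (indices shifted to start at 0)
  of class C^2 on B.\<close>
definition ON_normal_section :: "(real^2 \<Rightarrow> real^'n) \<Rightarrow> (nat \<Rightarrow> real^2 \<Rightarrow> real^'n) \<Rightarrow> bool" where
  "ON_normal_section X N \<longleftrightarrow> (\<forall>\<sigma> < CARD('n) - 2. Ck 2 Bdisc (N \<sigma>)) \<and>
     (\<forall>p\<in>Bdisc. (\<forall>\<sigma> < CARD('n) - 2. \<forall>i. pdB Bdisc X i p \<bullet> N \<sigma> p = 0) \<and>
        (\<forall>\<sigma> < CARD('n) - 2. \<forall>\<omega> < CARD('n) - 2.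
            N \<sigma> p \<bullet> N \<omega> p = (if \<sigma> = \<omega> then 1 else 0)))"

definition torsion :: "(nat \<Rightarrow> real^2 \<Rightarrow> real^'n) \<Rightarrow> nat \<Rightarrow> nat \<Rightarrow> 2 \<Rightarrow> real^2 \<Rightarrow> real" where
  "torsion N \<sigma> \<omega> i p = pdB Bdisc (N \<sigma>) i p \<bullet> N \<omega> p"

definition torsion_free :: "(nat \<Rightarrow> real^2 \<Rightarrow> real^'n) \<Rightarrow> bool" where
  "torsion_free N \<longleftrightarrow> (\<forall>p\<in>Bdisc. \<forall>\<sigma> < CARD('n) - 2. \<forall>\<omega> < CARD('n) - 2. \<forall>i.
      \<sigma> \<noteq> \<omega> \<longrightarrow> torsion N \<sigma> \<omega> i p = 0)"

definition Lcoef :: "(real^2 \<Rightarrow> real^'n) \<Rightarrow> (nat \<Rightarrow> real^2 \<Rightarrow> real^'n) \<Rightarrow> nat \<Rightarrow> 2 \<Rightarrow> 2 \<Rightarrow> real^2 \<Rightarrow> real" where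
  "Lcoef X N \<sigma> i j p = pd (pd X j) i p \<bullet> N \<sigma> p"

definition minimal_wrt :: "(real^2 \<Rightarrow> real^'n) \<Rightarrow> (nat \<Rightarrow> real^2 \<Rightarrow> real^'n) \<Rightarrow> bool" where
  "minimal_wrt X N \<longleftrightarrow> (\<forall>p\<in>ball 0 1. \<forall>\<sigma> < CARD('n) - 2.
      Lcoef X N \<sigma> 1 1 p + Lcoef X N \<sigma> 2 2 p = 0)"

definition gauss_curv :: "(real^2 \<Rightarrow> real^'n) \<Rightarrow> (nat \<Rightarrow> real^2 \<Rightarrow> real^'n) \<Rightarrow> real^2 \<Rightarrow> real" where
  "gauss_curv X N p = (\<Sum>\<sigma> < CARD('n) - 2.
      Lcoef X N \<sigma> 1 1 p * Lcoef X N \<sigma> 2 2 p - (Lcoef X N \<sigma> 1 2 p)\<^sup>2) / (Wf X p)\<^sup>2"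

definition stable :: "(real^2 \<Rightarrow> real^'n) \<Rightarrow> bool" where
  "stable X \<longleftrightarrow> (\<forall>(M :: real^2 \<Rightarrow> real^'n) \<phi>.
      Ck 2 Bdisc M \<and> (\<forall>p\<in>Bdisc. M p \<bullet> M p = 1 \<and> (\<forall>i. pdB Bdisc X i p \<bullet> M p = 0))
      \<and> C0inf \<phi> \<longrightarrow>
      deriv (deriv (\<lambda>\<epsilon>. area (\<lambda>p. X p + (\<epsilon> * \<phi> p) *\<^sub>R M p))) 0 \<ge> 0)"

end

theory Submission
  imports Defs
begin



lemma line_mvt:
  fixes g :: "'a::real_normed_vector \<Rightarrow> real"
  assumes "0 < h"
    and "\<And>s. 0 \<le> s \<Longrightarrow> s \<le> h \<Longrightarrow>
       ((\<lambda>t. g ((q + s *\<^sub>R a) + t *\<^sub>R a)) has_real_derivative g' (q + s *\<^sub>R a)) (at 0)"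
  shows "\<exists>\<xi>. 0 < \<xi> \<and> \<xi> < h \<and> g (q + h *\<^sub>R a) - g q = h * g' (q + \<xi> *\<^sub>R a)"
proof -
  have "DERIV (\<lambda>s. g (q + s *\<^sub>R a)) s :> g' (q + s *\<^sub>R a)" if "0 \<le> s" "s \<le> h" for s
  proof -
    have "((\<lambda>t. g (q + (t + s) *\<^sub>R a)) has_real_derivative g' (q + s *\<^sub>R a)) (at 0)"
      using assms(2)[OF that] by (simp add: algebra_simps scaleR_add_left)
    then show ?thesis using DERIV_shift[of "\<lambda>s. g (q + s *\<^sub>R a)" _ 0 s] by simp
  qed
  from MVT2[OF assms(1), of "\<lambda>s. g (q + s *\<^sub>R a)" "\<lambda>s. g' (q + s *\<^sub>R a)"] this
  show ?thesis by auto
qed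

lemma clairaut_scalar:
  fixes f f1 f2 f12 f21 :: "'a::real_normed_vector \<Rightarrow> real"
  assumes U: "open U" "p \<in> U"
  and d1: "\<And>q. q \<in> U \<Longrightarrow> ((\<lambda>t. f (q + t *\<^sub>R a)) has_real_derivative f1 q) (at 0)"
  and d2: "\<And>q. q \<in> U \<Longrightarrow> ((\<lambda>t. f (q + t *\<^sub>R b)) has_real_derivative f2 q) (at 0)"
  and d12: "\<And>q. q \<in> U \<Longrightarrow> ((\<lambda>t. f1 (q + t *\<^sub>R b)) has_real_derivative f12 q) (at 0)"
  and d21: "\<And>q. q \<in> U \<Longrightarrow> ((\<lambda>t. f2 (q + t *\<^sub>R a)) has_real_derivative f21 q) (at 0)"
  and c12: "continuous_on U f12" and c21: "continuous_on U f21"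
  shows "f12 p = f21 p"
proof (rule ccontr)
  assume ne: "f12 p \<noteq> f21 p"
  define e where "e = \<bar>f12 p - f21 p\<bar> / 2"
  have e: "e > 0" using ne by (simp add: e_def)
  obtain r where r: "r > 0" "ball p r \<subseteq> U" using U open_contains_ball by blast
  obtain d1' where d1': "d1' > 0" "\<And>q. q \<in> U \<Longrightarrow> dist q p < d1' \<Longrightarrow> dist (f12 q) (f12 p) < e"
    using c12 U(2) e unfolding continuous_on_iff by metis
  obtain d2' where d2': "d2' > 0" "\<And>q. q \<in> U \<Longrightarrow> dist q p < d2' \<Longrightarrow> dist (f21 q) (f21 p) < e"
    using c21 U(2) e unfolding continuous_on_iff by metis
  define R where "R = min r (min d1' d2')"
  have R: "R > 0" using r d1' d2' by (simp add: R_def)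
  define h where "h = R / (2 * (norm a + norm b + 1))"
  have den: "0 < norm a + norm b + 1" by (simp add: add_nonneg_pos)
  have h: "h > 0" using R den unfolding h_def by (intro divide_pos_pos) auto
  have hab: "h * (norm a + norm b) < R"
  proof -
    have "h * (norm a + norm b) \<le> h * (norm a + norm b + 1)" using h by simp
    also have "\<dots> = R / 2" unfolding h_def using den by (simp add: field_simps)
    finally show ?thesis using R by simp
  qed
  have near: "p + s *\<^sub>R a + u *\<^sub>R b \<in> U \<and> dist (p + s *\<^sub>R a + u *\<^sub>R b) p < R"
    if "0 \<le> s" "s \<le> h" "0 \<le> u" "u \<le> h" for s u
  proof -
    have "norm (s *\<^sub>R a + u *\<^sub>R b) \<le> s * norm a + u * norm b"
      using norm_triangle_ineq[of "s *\<^sub>R a" "u *\<^sub>R b"] that by simp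
    also have "\<dots> \<le> h * norm a + h * norm b"
      using that by (intro add_mono mult_right_mono) auto
    finally have "dist (p + s *\<^sub>R a + u *\<^sub>R b) p < R" using hab
      by (simp add: dist_norm algebra_simps)
    moreover hence "p + s *\<^sub>R a + u *\<^sub>R b \<in> U" using r R_def
      by (metis (no_types, lifting) dist_commute mem_ball min_less_iff_conj subsetD)
    ultimately show ?thesis by simp
  qed
  have inU: "p + s *\<^sub>R a + u *\<^sub>R b \<in> U" if "0 \<le> s" "s \<le> h" "0 \<le> u" "u \<le> h" for s u
    using near that by blast
  define \<Delta> where "\<Delta> = f (p + h *\<^sub>R a + h *\<^sub>R b) - f (p + h *\<^sub>R a) - f (p + h *\<^sub>R b) + f p"
  have "\<exists>\<xi>. 0 < \<xi> \<and> \<xi> < h \<and> (\<lambda>x. f (x + h *\<^sub>R b) - f x) (p + h *\<^sub>R a) - (\<lambda>x. f (x + h *\<^sub>R b) - f x) p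
      = h * (\<lambda>x. f1 (x + h *\<^sub>R b) - f1 x) (p + \<xi> *\<^sub>R a)"
  proof (rule line_mvt[OF h])
    fix s assume s: "0 \<le> s" "s \<le> h"
    have A: "p + s *\<^sub>R a + h *\<^sub>R b \<in> U" using inU[OF s] h by simp
    have B: "p + s *\<^sub>R a \<in> U" using inU[OF s, of 0] h by simp
    have "((\<lambda>t. f ((p + s *\<^sub>R a + h *\<^sub>R b) + t *\<^sub>R a) - f ((p + s *\<^sub>R a) + t *\<^sub>R a)) has_real_derivative
        f1 (p + s *\<^sub>R a + h *\<^sub>R b) - f1 (p + s *\<^sub>R a)) (at 0)"
      by (intro derivative_intros d1 A B)
    thus "((\<lambda>t. (\<lambda>x. f (x + h *\<^sub>R b) - f x) (p + s *\<^sub>R a + t *\<^sub>R a)) has_real_derivative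
        (\<lambda>x. f1 (x + h *\<^sub>R b) - f1 x) (p + s *\<^sub>R a)) (at 0)"
      by (simp add: algebra_simps)
  qed
  then obtain \<xi> where xi: "0 < \<xi>" "\<xi> < h"
    "\<Delta> = h * (f1 (p + \<xi> *\<^sub>R a + h *\<^sub>R b) - f1 (p + \<xi> *\<^sub>R a))"
    unfolding \<Delta>_def by (auto simp: algebra_simps)
  have "\<exists>\<eta>. 0 < \<eta> \<and> \<eta> < h \<and> f1 ((p + \<xi> *\<^sub>R a) + h *\<^sub>R b) - f1 (p + \<xi> *\<^sub>R a)
      = h * f12 ((p + \<xi> *\<^sub>R a) + \<eta> *\<^sub>R b)"
  proof (rule line_mvt[OF h])
    fix s assume s: "0 \<le> s" "s \<le> h"
    show "((\<lambda>t. f1 (p + \<xi> *\<^sub>R a + s *\<^sub>R b + t *\<^sub>R b)) has_real_derivative f12 (p + \<xi> *\<^sub>R a + s *\<^sub>R b)) (at 0)"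
      using d12 inU[of \<xi> s] xi s by simp
  qed
  then obtain \<eta> where eta: "0 < \<eta>" "\<eta> < h" "\<Delta> = h * h * f12 (p + \<xi> *\<^sub>R a + \<eta> *\<^sub>R b)"
    using xi by auto
  have "\<exists>\<xi>. 0 < \<xi> \<and> \<xi> < h \<and> (\<lambda>x. f (x + h *\<^sub>R a) - f x) (p + h *\<^sub>R b) - (\<lambda>x. f (x + h *\<^sub>R a) - f x) p
      = h * (\<lambda>x. f2 (x + h *\<^sub>R a) - f2 x) (p + \<xi> *\<^sub>R b)"
  proof (rule line_mvt[OF h])
    fix s assume s: "0 \<le> s" "s \<le> h"
    have A: "p + s *\<^sub>R b + h *\<^sub>R a \<in> U" using inU[OF _ _ s, of h] h by (simp add: algebra_simps)
    have B: "p + s *\<^sub>R b \<in> U" using inU[OF _ _ s, of 0] h by simp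
    have "((\<lambda>t. f ((p + s *\<^sub>R b + h *\<^sub>R a) + t *\<^sub>R b) - f ((p + s *\<^sub>R b) + t *\<^sub>R b)) has_real_derivative
        f2 (p + s *\<^sub>R b + h *\<^sub>R a) - f2 (p + s *\<^sub>R b)) (at 0)"
      by (intro derivative_intros d2 A B)
    thus "((\<lambda>t. (\<lambda>x. f (x + h *\<^sub>R a) - f x) (p + s *\<^sub>R b + t *\<^sub>R b)) has_real_derivative
        (\<lambda>x. f2 (x + h *\<^sub>R a) - f2 x) (p + s *\<^sub>R b)) (at 0)"
      by (simp add: algebra_simps)
  qed
  then obtain \<xi>' where xi': "0 < \<xi>'" "\<xi>' < h"
    "\<Delta> = h * (f2 (p + \<xi>' *\<^sub>R b + h *\<^sub>R a) - f2 (p + \<xi>' *\<^sub>R b))"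
    unfolding \<Delta>_def by (auto simp: algebra_simps)
  have "\<exists>\<eta>. 0 < \<eta> \<and> \<eta> < h \<and> f2 ((p + \<xi>' *\<^sub>R b) + h *\<^sub>R a) - f2 (p + \<xi>' *\<^sub>R b)
      = h * f21 ((p + \<xi>' *\<^sub>R b) + \<eta> *\<^sub>R a)"
  proof (rule line_mvt[OF h])
    fix s assume s: "0 \<le> s" "s \<le> h"
    show "((\<lambda>t. f2 (p + \<xi>' *\<^sub>R b + s *\<^sub>R a + t *\<^sub>R a)) has_real_derivative f21 (p + \<xi>' *\<^sub>R b + s *\<^sub>R a)) (at 0)"
    proof -
      have "p + \<xi>' *\<^sub>R b + s *\<^sub>R a \<in> U" using inU[of s \<xi>'] xi' s by (simp add: algebra_simps)
      from d21[OF this] show ?thesis by simp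
    qed
  qed
  then obtain \<eta>' where eta': "0 < \<eta>'" "\<eta>' < h" "\<Delta> = h * h * f21 (p + \<eta>' *\<^sub>R a + \<xi>' *\<^sub>R b)"
    using xi' by (auto simp: algebra_simps)
  have eq: "f12 (p + \<xi> *\<^sub>R a + \<eta> *\<^sub>R b) = f21 (p + \<eta>' *\<^sub>R a + \<xi>' *\<^sub>R b)"
    using eta(3) eta'(3) h by simp
  have n1: "dist (f12 (p + \<xi> *\<^sub>R a + \<eta> *\<^sub>R b)) (f12 p) < e"
    using near[of \<xi> \<eta>] xi eta R_def by (intro d1'(2)) auto
  have n2: "dist (f21 (p + \<eta>' *\<^sub>R a + \<xi>' *\<^sub>R b)) (f21 p) < e"
    using near[of \<eta>' \<xi>'] xi' eta' R_def by (intro d2'(2)) auto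
  have "\<bar>f12 p - f21 p\<bar> < 2 * e" using n1 n2 eq by (simp add: dist_real_def)
  thus False by (simp add: e_def)
qed



lemma orth_decomp:
  fixes A1 A2 v :: "real^'n" and Nv :: "nat \<Rightarrow> real^'n"
  assumes card: "CARD('n) = m + 2"
    and on: "\<And>\<omega> \<omega>'. \<omega> < m \<Longrightarrow> \<omega>' < m \<Longrightarrow> Nv \<omega> \<bullet> Nv \<omega>' = (if \<omega> = \<omega>' then 1 else 0)"
    and a1: "\<And>\<omega>. \<omega> < m \<Longrightarrow> A1 \<bullet> Nv \<omega> = 0" and a2: "\<And>\<omega>. \<omega> < m \<Longrightarrow> A2 \<bullet> Nv \<omega> = 0"
    and w1: "A1 \<bullet> A1 = W" and w2: "A2 \<bullet> A2 = W" and o12: "A1 \<bullet> A2 = 0" and W: "W > 0"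
    and v: "\<And>\<omega>. \<omega> < m \<Longrightarrow> v \<bullet> Nv \<omega> = 0"
  shows "v \<bullet> v = ((v \<bullet> A1)\<^sup>2 + (v \<bullet> A2)\<^sup>2) / W"
proof -
  define NS where "NS = Nv ` {..<m}"
  define Bs where "Bs = insert A1 (insert A2 NS)"
  have injN: "inj_on Nv {..<m}"
  proof (rule inj_onI)
    fix x y assume "x \<in> {..<m}" "y \<in> {..<m}" "Nv x = Nv y"
    thus "x = y" using on[of x y] on[of x x] by (auto split: if_splits)
  qed
  have cNS: "card NS = m" unfolding NS_def using card_image[OF injN] by simp
  have A1z: "A1 \<noteq> 0" using w1 W by auto
  have A2z: "A2 \<noteq> 0" using w2 W by auto
  have A2NS: "A2 \<notin> NS"
  proof
    assume "A2 \<in> NS" then obtain \<omega> where "\<omega> < m" "A2 = Nv \<omega>" by (auto simp: NS_def)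
    thus False using a2[of \<omega>] on[of \<omega> \<omega>] by simp
  qed
  have A1NS: "A1 \<notin> insert A2 NS"
  proof
    assume "A1 \<in> insert A2 NS"
    moreover have "A1 \<noteq> A2" using o12 w1 W by auto
    ultimately obtain \<omega> where "\<omega> < m" "A1 = Nv \<omega>" by (auto simp: NS_def)
    thus False using a1[of \<omega>] on[of \<omega> \<omega>] by simp
  qed
  have fin: "finite Bs" by (simp add: Bs_def NS_def)
  have cB: "card Bs = CARD('n)" unfolding Bs_def using A1NS A2NS cNS card by (simp add: NS_def)
  have porth: "pairwise orthogonal Bs"
    unfolding pairwise_def Bs_def NS_def orthogonal_def
    using on a1 a2 o12 by (auto simp: inner_commute)
  have z: "0 \<notin> Bs" unfolding Bs_def NS_def using A1z A2z on by force
  have ind: "independent Bs" by (rule pairwise_orthogonal_independent[OF porth z])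
  have sp: "UNIV \<subseteq> span Bs"
    by (rule card_ge_dim_independent) (use ind cB in auto)
  define w where "w = v - ((v \<bullet> A1) / W) *\<^sub>R A1 - ((v \<bullet> A2) / W) *\<^sub>R A2"
  have wo: "orthogonal w y" if "y \<in> Bs" for y
  proof -
    have "y = A1 \<or> y = A2 \<or> (\<exists>\<omega><m. y = Nv \<omega>)" using that by (auto simp: Bs_def NS_def)
    moreover have "w \<bullet> A1 = v \<bullet> A1 - (v \<bullet> A1 / W) * (A1 \<bullet> A1) - (v \<bullet> A2 / W) * (A2 \<bullet> A1)"
      unfolding w_def by (simp add: inner_diff_left)
    hence "w \<bullet> A1 = 0" using W w1 o12 by (simp add: inner_commute)
    moreover have "w \<bullet> A2 = v \<bullet> A2 - (v \<bullet> A1 / W) * (A1 \<bullet> A2) - (v \<bullet> A2 / W) * (A2 \<bullet> A2)"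
      unfolding w_def by (simp add: inner_diff_left)
    hence "w \<bullet> A2 = 0" using W w2 o12 by (simp add: inner_commute)
    moreover have "w \<bullet> Nv \<omega> = 0" if "\<omega> < m" for \<omega> using v a1 a2 that unfolding w_def
      by (simp add: inner_diff_left)
    ultimately show ?thesis unfolding orthogonal_def by auto
  qed
  have "orthogonal w w" using orthogonal_to_span[OF _ wo] sp by auto
  hence "w = 0" by (simp add: orthogonal_def)
  hence vv: "v = ((v \<bullet> A1) / W) *\<^sub>R A1 + ((v \<bullet> A2) / W) *\<^sub>R A2" by (simp add: w_def algebra_simps)
  have "v \<bullet> v = v \<bullet> (((v \<bullet> A1) / W) *\<^sub>R A1 + ((v \<bullet> A2) / W) *\<^sub>R A2)"
    using vv by metis
  also have "\<dots> = ((v \<bullet> A1)\<^sup>2 + (v \<bullet> A2)\<^sup>2) / W"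
    by (simp add: inner_add_right power2_eq_square add_divide_distrib)
  finally show ?thesis .
qed



definition Pr :: "real \<Rightarrow> real \<Rightarrow> real \<Rightarrow> real \<Rightarrow> real \<Rightarrow> real \<Rightarrow> real \<Rightarrow> real \<Rightarrow> real \<Rightarrow> real \<Rightarrow> real" where
  "Pr E0 E1 E2 G0 G1 G2 F0 F1 F2 e =
     (E0 + E1*e + E2*e\<^sup>2) * (G0 + G1*e + G2*e\<^sup>2) - (F0 + F1*e + F2*e\<^sup>2)\<^sup>2"
definition P1r :: "real \<Rightarrow> real \<Rightarrow> real \<Rightarrow> real \<Rightarrow> real \<Rightarrow> real \<Rightarrow> real \<Rightarrow> real \<Rightarrow> real \<Rightarrow> real \<Rightarrow> real" where
  "P1r E0 E1 E2 G0 G1 G2 F0 F1 F2 e =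
     (E1 + 2*E2*e) * (G0 + G1*e + G2*e\<^sup>2) + (E0 + E1*e + E2*e\<^sup>2) * (G1 + 2*G2*e)
     - 2 * (F0 + F1*e + F2*e\<^sup>2) * (F1 + 2*F2*e)"
definition P2r :: "real \<Rightarrow> real \<Rightarrow> real \<Rightarrow> real \<Rightarrow> real \<Rightarrow> real \<Rightarrow> real \<Rightarrow> real \<Rightarrow> real \<Rightarrow> real \<Rightarrow> real" where
  "P2r E0 E1 E2 G0 G1 G2 F0 F1 F2 e =
     2*E2 * (G0 + G1*e + G2*e\<^sup>2) + 2 * (E1 + 2*E2*e) * (G1 + 2*G2*e) + (E0 + E1*e + E2*e\<^sup>2) * (2*G2)
     - 2 * (F1 + 2*F2*e)\<^sup>2 - 2 * (F0 + F1*e + F2*e\<^sup>2) * (2*F2)"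

lemma Pr_deriv: "((Pr E0 E1 E2 G0 G1 G2 F0 F1 F2) has_real_derivative P1r E0 E1 E2 G0 G1 G2 F0 F1 F2 e) (at e)"
  unfolding Pr_def[abs_def] P1r_def
  by (rule derivative_eq_intros refl | simp)+ (simp add: algebra_simps power2_eq_square)

lemma P1r_deriv: "((P1r E0 E1 E2 G0 G1 G2 F0 F1 F2) has_real_derivative P2r E0 E1 E2 G0 G1 G2 F0 F1 F2 e) (at e)"
  unfolding P1r_def[abs_def] P2r_def
  by (rule derivative_eq_intros refl | simp)+ (simp add: algebra_simps power2_eq_square)

lemma sqrtP_deriv:
  assumes "Pr E0 E1 E2 G0 G1 G2 F0 F1 F2 e > 0"
  shows "((\<lambda>e. sqrt (Pr E0 E1 E2 G0 G1 G2 F0 F1 F2 e)) has_real_derivative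
     P1r E0 E1 E2 G0 G1 G2 F0 F1 F2 e / (2 * sqrt (Pr E0 E1 E2 G0 G1 G2 F0 F1 F2 e))) (at e)"
  using DERIV_chain2[OF DERIV_real_sqrt[OF assms] Pr_deriv] by (simp add: field_simps)

lemma q1_deriv:
  assumes "Pr E0 E1 E2 G0 G1 G2 F0 F1 F2 e > 0"
  shows "((\<lambda>e. P1r E0 E1 E2 G0 G1 G2 F0 F1 F2 e / (2 * sqrt (Pr E0 E1 E2 G0 G1 G2 F0 F1 F2 e))) has_real_derivative
     P2r E0 E1 E2 G0 G1 G2 F0 F1 F2 e / (2 * sqrt (Pr E0 E1 E2 G0 G1 G2 F0 F1 F2 e))
     - (P1r E0 E1 E2 G0 G1 G2 F0 F1 F2 e)\<^sup>2 / (4 * Pr E0 E1 E2 G0 G1 G2 F0 F1 F2 e * sqrt (Pr E0 E1 E2 G0 G1 G2 F0 F1 F2 e))) (at e)"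
proof -
  let ?P = "Pr E0 E1 E2 G0 G1 G2 F0 F1 F2" and ?P1 = "P1r E0 E1 E2 G0 G1 G2 F0 F1 F2"
    and ?P2 = "P2r E0 E1 E2 G0 G1 G2 F0 F1 F2"
  have s: "sqrt (?P e) > 0" using assms by simp
  have d: "((\<lambda>e. 2 * sqrt (?P e)) has_real_derivative 2 * (?P1 e / (2 * sqrt (?P e)))) (at e)"
    by (rule DERIV_cmult[OF sqrtP_deriv[OF assms]])
  have "((\<lambda>e. ?P1 e / (2 * sqrt (?P e))) has_real_derivative
     (?P2 e * (2 * sqrt (?P e)) - ?P1 e * (2 * (?P1 e / (2 * sqrt (?P e))))) / (2 * sqrt (?P e))\<^sup>2) (at e)"
    using DERIV_divide[OF P1r_deriv d] s by (simp add: power2_eq_square)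
  moreover have "(?P2 e * (2 * sqrt (?P e)) - ?P1 e * (2 * (?P1 e / (2 * sqrt (?P e))))) / (2 * sqrt (?P e))\<^sup>2
      = ?P2 e / (2 * sqrt (?P e)) - (?P1 e)\<^sup>2 / (4 * ?P e * sqrt (?P e))"
    using s assms by (simp add: field_simps power2_eq_square)
  ultimately show ?thesis by simp
qed


lemma Ck_cont: "Ck k S f \<Longrightarrow> continuous_on S f"
  by (cases k) auto

lemma pd_eqI: "((\<lambda>t. f (p + t *\<^sub>R axis i 1)) has_vector_derivative d) (at 0) \<Longrightarrow> pd f i p = d"
  unfolding pd_def by (rule vector_derivative_at)

lemma open_line: "open (T::'a::real_normed_vector set) \<Longrightarrow> open {t::real. p + t *\<^sub>R a \<in> T}"
proof -
  assume T: "open T"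
  have "continuous_on UNIV (\<lambda>t::real. p + t *\<^sub>R a)" by (intro continuous_intros)
  from open_vimage[OF T this] show ?thesis by (simp add: vimage_def)
qed

lemma line_transform:
  fixes p :: "'a::real_normed_vector"
  assumes "((\<lambda>t. f (p + t *\<^sub>R a)) has_vector_derivative d) (at 0)" "open T" "p \<in> T"
    "\<And>q. q \<in> T \<Longrightarrow> f q = g q"
  shows "((\<lambda>t. g (p + t *\<^sub>R a)) has_vector_derivative d) (at 0)"
proof (rule has_vector_derivative_transform_within_open[OF assms(1)])
  show "open {t::real. p + t *\<^sub>R a \<in> T}"
    by (rule open_line[OF assms(2)])
qed (use assms in auto)

lemma Ck_open_subset: "Ck k S f \<Longrightarrow> T \<subseteq> S \<Longrightarrow> open T \<Longrightarrow> Ck k T f"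
proof (induction k arbitrary: f)
  case 0 thus ?case using continuous_on_subset by auto
next
  case (Suc k)
  from Suc.prems(1) obtain g where g: "\<forall>i. Ck k S (g i)"
    "\<forall>p\<in>interior S. \<forall>i. ((\<lambda>t. f (p + t *\<^sub>R axis i 1)) has_vector_derivative g i p) (at 0)"
    and c: "continuous_on S f" by auto
  have "interior T \<subseteq> interior S" using Suc.prems(2) by (rule interior_mono)
  hence "\<forall>p\<in>interior T. \<forall>i. ((\<lambda>t. f (p + t *\<^sub>R axis i 1)) has_vector_derivative g i p) (at 0)"
    using g(2) by blast
  moreover have "\<forall>i. Ck k T (g i)" using g(1) Suc.IH Suc.prems by blast
  moreover have "continuous_on T f" using c Suc.prems continuous_on_subset by blast
  ultimately show ?case by auto
qed

lemma Ck_cong_open: "Ck k T f \<Longrightarrow> open T \<Longrightarrow> (\<And>p. p \<in> T \<Longrightarrow> f p = h p) \<Longrightarrow> Ck k T h"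
proof (cases k)
  case 0 thus "Ck k T f \<Longrightarrow> open T \<Longrightarrow> (\<And>p. p \<in> T \<Longrightarrow> f p = h p) \<Longrightarrow> Ck k T h"
    using continuous_on_cong by (metis Ck.simps(1))
next
  case (Suc k')
  assume A: "Ck k T f" "open T" "\<And>p. p \<in> T \<Longrightarrow> f p = h p"
  from A(1) Suc obtain g where g: "\<forall>i. Ck k' T (g i)"
    "\<forall>p\<in>interior T. \<forall>i. ((\<lambda>t. f (p + t *\<^sub>R axis i 1)) has_vector_derivative g i p) (at 0)"
    and c: "continuous_on T f" by auto
  have "continuous_on T h" using c A(3) continuous_on_cong by metis
  moreover have "\<forall>p\<in>interior T. \<forall>i. ((\<lambda>t. h (p + t *\<^sub>R axis i 1)) has_vector_derivative g i p) (at 0)"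
    using g(2) A(2,3) interior_open[OF A(2)] by (auto intro: line_transform)
  ultimately show "Ck k T h" using Suc g(1) by auto
qed

lemma Ck_Suc_open_pd:
  assumes "open T" "Ck (Suc k) T f"
  shows "\<forall>p\<in>T. \<forall>i. ((\<lambda>t. f (p + t *\<^sub>R axis i 1)) has_vector_derivative pd f i p) (at 0)"
    and "\<And>i. Ck k T (pd f i)"
proof -
  from assms(2) obtain g where g: "\<forall>i. Ck k T (g i)"
    "\<forall>p\<in>interior T. \<forall>i. ((\<lambda>t. f (p + t *\<^sub>R axis i 1)) has_vector_derivative g i p) (at 0)"
    by auto
  have it: "interior T = T" by (rule interior_open[OF assms(1)])
  have dg: "((\<lambda>t. f (p + t *\<^sub>R axis i 1)) has_vector_derivative g i p) (at 0)" if "p \<in> T" for p i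
    using g(2) that it by auto
  have eq: "pd f i p = g i p" if "p \<in> T" for p i
    by (rule pd_eqI[OF dg[OF that]])
  show "\<forall>p\<in>T. \<forall>i. ((\<lambda>t. f (p + t *\<^sub>R axis i 1)) has_vector_derivative pd f i p) (at 0)"
    using dg eq by simp
  show "Ck k T (pd f i)" for i
  proof (rule Ck_cong_open[OF _ assms(1)])
    show "Ck k T (g i)" using g(1) by blast
    show "g i p = pd f i p" if "p \<in> T" for p using eq[OF that] by simp
  qed
qed

lemma pdB_eqI:
  assumes "p \<in> interior S" "continuous_on S g" "\<And>q. q \<in> interior S \<Longrightarrow> pd f i q = g q"
  shows "pdB S f i p = g p"
proof -
  have at: "at p within interior S = at p" by (rule at_within_open) (use assms in auto)
  have "isCont g p" using continuous_on_interior[OF assms(2) assms(1)] .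
  hence gl: "(g \<longlongrightarrow> g p) (at p)" by (simp add: isCont_def)
  have "\<forall>\<^sub>F q in at p. q \<in> interior S" by (rule eventually_at_in_open'[OF open_interior assms(1)])
  hence ev: "\<forall>\<^sub>F q in at p. pd f i q = g q" by (rule eventually_mono) (rule assms(3))
  have "(pd f i \<longlongrightarrow> g p) (at p)" using gl unfolding tendsto_cong[OF ev] .
  thus ?thesis unfolding pdB_def at by (intro tendsto_Lim) auto
qed

lemma pdB_Ck:
  assumes "Ck (Suc k) S f" "p \<in> interior S"
  shows "pdB S f i p = pd f i p"
proof -
  from assms(1) obtain g where g: "\<forall>i. Ck k S (g i)"
    "\<forall>p\<in>interior S. \<forall>i. ((\<lambda>t. f (p + t *\<^sub>R axis i 1)) has_vector_derivative g i p) (at 0)"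
    by auto
  have eq: "pd f i q = g i q" if "q \<in> interior S" for q
    by (rule pd_eqI) (use g(2) that in blast)
  have c: "continuous_on S (g i)" by (rule Ck_cont[of k]) (use g(1) in blast)
  have "pdB S f i p = g i p" by (rule pdB_eqI[OF assms(2) c eq])
  also have "\<dots> = pd f i p" using eq[OF assms(2)] by (rule sym)
  finally show ?thesis .
qed

lemma interior_Bdisc: "interior Bdisc = ball 0 1" by (simp add: Bdisc_def)

lemma int_compact:
  fixes f :: "'a::euclidean_space \<Rightarrow> real"
  assumes "compact S" "continuous_on S f"
  shows "f integrable_on S"
proof -
  have "(\<lambda>x. indicator S x *\<^sub>R f x) integrable_on UNIV"
    by (rule integrable_on_lborel[OF borel_integrable_compact[OF assms]])
  moreover have "(\<lambda>x. indicator S x *\<^sub>R f x) = (\<lambda>x. if x \<in> S then f x else 0)"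
    by (auto simp: indicator_def)
  ultimately have "(\<lambda>x. if x \<in> S then f x else 0) integrable_on UNIV" by simp
  thus ?thesis by (simp only: integrable_restrict_UNIV)
qed

lemma deriv_const_inner:
  fixes f g :: "real^2 \<Rightarrow> 'b::real_inner"
  assumes "((\<lambda>t. f (p + t *\<^sub>R a)) has_vector_derivative f') (at 0)"
    "((\<lambda>t. g (p + t *\<^sub>R a)) has_vector_derivative g') (at 0)"
    "open T" "p \<in> T" "\<And>q. q \<in> T \<Longrightarrow> f q \<bullet> g q = c"
  shows "f p \<bullet> g' + f' \<bullet> g p = 0"
proof -
  have d0: "((\<lambda>t. f (p + t *\<^sub>R a) \<bullet> g (p + t *\<^sub>R a)) has_vector_derivative f (p + 0 *\<^sub>R a) \<bullet> g' + f' \<bullet> g (p + 0 *\<^sub>R a)) (at 0)"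
    by (rule bounded_bilinear.has_vector_derivative[OF bounded_bilinear_inner assms(1,2)])
  have d: "((\<lambda>t. f (p + t *\<^sub>R a) \<bullet> g (p + t *\<^sub>R a)) has_real_derivative f p \<bullet> g' + f' \<bullet> g p) (at 0)"
    using d0 unfolding has_real_derivative_iff_has_vector_derivative by simp
  have c0: "((\<lambda>t::real. c) has_real_derivative 0) (at 0)" by simp
  have o: "open {t::real. p + t *\<^sub>R a \<in> T}" by (rule open_line[OF assms(3)])
  have "((\<lambda>t. f (p + t *\<^sub>R a) \<bullet> g (p + t *\<^sub>R a)) has_real_derivative 0) (at 0)"
    by (rule has_field_derivative_transform_within_open[OF c0 o]) (use assms(4,5) in auto)
  thus ?thesis by (rule DERIV_unique[OF d])
qed




lemma sqrt_deriv_gen: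
  assumes "(P has_real_derivative P1v) (at e)" "P e > 0"
  shows "((\<lambda>e. sqrt (P e)) has_real_derivative P1v / (2 * sqrt (P e))) (at e)"
  using DERIV_chain2[OF DERIV_real_sqrt[OF assms(2)] assms(1)] by (simp add: field_simps)

lemma quot_deriv_gen:
  assumes d: "(P has_real_derivative P1 e) (at e)" and d1: "(P1 has_real_derivative P2v) (at e)" and pos: "P e > 0"
  shows "((\<lambda>e. P1 e / (2 * sqrt (P e))) has_real_derivative
     P2v / (2 * sqrt (P e)) - (P1 e)\<^sup>2 / (4 * P e * sqrt (P e))) (at e)"
proof -
  have s: "sqrt (P e) > 0" using pos by simp
  have dd: "((\<lambda>e. 2 * sqrt (P e)) has_real_derivative 2 * (P1 e / (2 * sqrt (P e)))) (at e)"
    by (rule DERIV_cmult[OF sqrt_deriv_gen[OF d pos]])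
  have "((\<lambda>e. P1 e / (2 * sqrt (P e))) has_real_derivative
     (P2v * (2 * sqrt (P e)) - P1 e * (2 * (P1 e / (2 * sqrt (P e))))) / (2 * sqrt (P e))\<^sup>2) (at e)"
    using DERIV_divide[OF d1 dd] s by (simp add: power2_eq_square)
  moreover have "(P2v * (2 * sqrt (P e)) - P1 e * (2 * (P1 e / (2 * sqrt (P e))))) / (2 * sqrt (P e))\<^sup>2
      = P2v / (2 * sqrt (P e)) - (P1 e)\<^sup>2 / (4 * P e * sqrt (P e))"
    using s pos by (simp add: field_simps power2_eq_square)
  ultimately show ?thesis by simp
qed

lemma unif_pos:
  fixes P :: "real \<Rightarrow> 'a::metric_space \<Rightarrow> real"
  assumes S: "compact S" and c: "continuous_on ({-1..1} \<times> S) (\<lambda>(e, p). P e p)"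
    and pos: "\<And>p. p \<in> S \<Longrightarrow> P 0 p > 0"
  shows "\<exists>\<delta>>0. \<forall>e p. \<bar>e\<bar> < \<delta> \<longrightarrow> p \<in> S \<longrightarrow> P e p > 0"
proof (cases "S = {}")
  case True thus ?thesis by (intro exI[of _ 1]) auto
next
  case False
  have c0: "continuous_on S (P 0)"
  proof -
    have "continuous_on S (\<lambda>p. (\<lambda>(e, p). P e p) (0::real, p))"
      by (rule continuous_on_compose2[OF c]) (auto intro!: continuous_intros)
    thus ?thesis by simp
  qed
  obtain x0 where x0: "x0 \<in> S" "\<And>y. y \<in> S \<Longrightarrow> P 0 x0 \<le> P 0 y"
    using continuous_attains_inf[OF S False c0] by blast
  define m0 where "m0 = P 0 x0"
  have m0: "m0 > 0" using pos x0 by (simp add: m0_def)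
  have K: "compact ({-1..1::real} \<times> S)" using S by (intro compact_Times) auto
  have uc: "uniformly_continuous_on ({-1..1} \<times> S) (\<lambda>(e, p). P e p)"
    by (rule compact_uniformly_continuous[OF c K])
  obtain d where d: "d > 0" "\<And>x x'. x \<in> {-1..1} \<times> S \<Longrightarrow> x' \<in> {-1..1} \<times> S \<Longrightarrow> dist x' x < d \<Longrightarrow>
      dist ((\<lambda>(e, p). P e p) x') ((\<lambda>(e, p). P e p) x) < m0"
    using uc m0 unfolding uniformly_continuous_on_def by metis
  show ?thesis
  proof (intro exI[of _ "min d 1"] conjI allI impI)
    show "0 < min d 1" using d by simp
    fix e p assume e: "\<bar>e\<bar> < min d 1" and p: "p \<in> S"
    have "dist (e, p) (0, p) = \<bar>e\<bar>" by (simp add: dist_Pair_Pair dist_real_def)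
    hence "dist (P e p) (P 0 p) < m0" using d(2)[of "(0, p)" "(e, p)"] e p by (auto simp: abs_less_iff)
    moreover have "P 0 p \<ge> m0" using x0 p by (simp add: m0_def)
    ultimately show "P e p > 0" by (simp add: dist_real_def abs_less_iff)
  qed
qed

lemma cont_zero_ext:
  fixes F :: "real \<times> 'a::topological_space \<Rightarrow> real"
  assumes "open U" "open Ob" "closed S" "S \<subseteq> Ob" "continuous_on (U \<times> Ob) F"
    "\<And>e p. e \<in> U \<Longrightarrow> p \<notin> S \<Longrightarrow> F (e, p) = 0"
  shows "continuous_on (U \<times> UNIV) F"
proof -
  have "continuous_on (U \<times> (- S)) F"
  proof (rule continuous_on_eq[OF continuous_on_const[of _ 0]])
    show "\<And>x. x \<in> U \<times> - S \<Longrightarrow> 0 = F x" using assms(6) by auto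
  qed
  hence "continuous_on (U \<times> Ob \<union> U \<times> (- S)) F"
    using assms by (intro continuous_on_open_Un) (auto intro: open_Times)
  moreover have "U \<times> Ob \<union> U \<times> (- S) = U \<times> UNIV" using assms(4) by auto
  ultimately show ?thesis by simp
qed


lemma integral_zero_outside:
  fixes f :: "'a::euclidean_space \<Rightarrow> real"
  assumes "\<And>p. p \<notin> S \<Longrightarrow> f p = 0" "S \<subseteq> B"
  shows "integral B f = integral UNIV f"
proof -
  have "(\<lambda>x. if x \<in> B then f x else 0) = f"
  proof (rule ext)
    fix x show "(if x \<in> B then f x else 0) = f x" using assms by (cases "x \<in> S") auto
  qed
  thus ?thesis using integral_restrict_UNIV[of B f] by simp
qed

lemma second_deriv_integral:
  fixes P P1 P2 :: "real \<Rightarrow> real^2 \<Rightarrow> real" and B Ob S :: "(real^2) set" and a b :: "real^2"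
  assumes Ob: "open Ob" and S: "compact S" "S \<subseteq> Ob" and SB: "S \<subseteq> B" and SC: "S \<subseteq> cbox a b"
    and B: "compact B"
    and dP: "\<And>e p. ((\<lambda>e. P e p) has_real_derivative P1 e p) (at e)"
    and dP1: "\<And>e p. ((\<lambda>e. P1 e p) has_real_derivative P2 e p) (at e)"
    and cP: "continuous_on (UNIV \<times> Ob) (\<lambda>x. P (fst x) (snd x))"
    and cP1: "continuous_on (UNIV \<times> Ob) (\<lambda>x. P1 (fst x) (snd x))"
    and cP2: "continuous_on (UNIV \<times> Ob) (\<lambda>x. P2 (fst x) (snd x))"
    and out: "\<And>e p. p \<notin> S \<Longrightarrow> P e p = P 0 p \<and> P1 e p = 0 \<and> P2 e p = 0"
    and pos: "\<And>p. p \<in> Ob \<Longrightarrow> P 0 p > 0"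
    and i0: "(\<lambda>p. sqrt (P 0 p)) integrable_on B"
  shows "deriv (deriv (\<lambda>e. integral B (\<lambda>p. sqrt (P e p)))) 0
           = integral B (\<lambda>p. P2 0 p / (2 * sqrt (P 0 p)) - (P1 0 p)\<^sup>2 / (4 * P 0 p * sqrt (P 0 p)))"
    and "(\<lambda>p. P2 0 p / (2 * sqrt (P 0 p)) - (P1 0 p)\<^sup>2 / (4 * P 0 p * sqrt (P 0 p))) integrable_on B"
proof -
  have cS: "continuous_on ({-1..1} \<times> S) (\<lambda>(e, p). P e p)"
  proof -
    have "{-1..1} \<times> S \<subseteq> UNIV \<times> Ob" using S(2) by auto
    from continuous_on_subset[OF cP this] show ?thesis by (simp add: case_prod_beta)
  qed
  obtain \<delta> where \<delta>: "\<delta> > 0" "\<And>e p. \<bar>e\<bar> < \<delta> \<Longrightarrow> p \<in> S \<Longrightarrow> P e p > 0"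
    using unif_pos[OF S(1) cS] pos S(2) by blast
  define U where "U = {-\<delta><..<\<delta>}"
  have U: "open U" "convex U" "0 \<in> U" using \<delta> by (auto simp: U_def)
  have posU: "P e p > 0" if "e \<in> U" "p \<in> Ob" for e p
  proof (cases "p \<in> S")
    case True thus ?thesis using \<delta>(2)[of e p] that by (auto simp: U_def abs_less_iff)
  next
    case False thus ?thesis using out[OF False, of e] pos[OF that(2)] by simp
  qed
  define k where "k e p = sqrt (P e p) - sqrt (P 0 p)" for e p
  define k1 where "k1 e p = P1 e p / (2 * sqrt (P e p))" for e p
  define k2 where "k2 e p = P2 e p / (2 * sqrt (P e p)) - (P1 e p)\<^sup>2 / (4 * P e p * sqrt (P e p))" for e p
  have kout: "k e p = 0" "k1 e p = 0" "k2 e p = 0" if "p \<notin> S" for e p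
    using out[OF that, of e] by (auto simp: k_def k1_def k2_def)
  have cPU: "continuous_on (U \<times> Ob) (\<lambda>x. P (fst x) (snd x))" by (rule continuous_on_subset[OF cP]) auto
  have cP1U: "continuous_on (U \<times> Ob) (\<lambda>x. P1 (fst x) (snd x))" by (rule continuous_on_subset[OF cP1]) auto
  have cP2U: "continuous_on (U \<times> Ob) (\<lambda>x. P2 (fst x) (snd x))" by (rule continuous_on_subset[OF cP2]) auto
  have cP0U: "continuous_on (U \<times> Ob) (\<lambda>x. P 0 (snd x))"
  proof -
    have "continuous_on (U \<times> Ob) (\<lambda>x. (\<lambda>x. P (fst x) (snd x)) (0::real, snd x))"
      by (rule continuous_on_compose2[OF cP]) (auto intro!: continuous_intros)
    thus ?thesis by simp
  qed
  have nz: "\<And>x. x \<in> U \<times> Ob \<Longrightarrow> P (fst x) (snd x) \<noteq> 0" using posU by fastforce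
  have nzs: "\<And>x. x \<in> U \<times> Ob \<Longrightarrow> sqrt (P (fst x) (snd x)) \<noteq> 0" using posU by fastforce
  have ck: "continuous_on (U \<times> Ob) (\<lambda>x. k (fst x) (snd x))"
    unfolding k_def by (intro continuous_intros cPU cP0U)
  have ck1: "continuous_on (U \<times> Ob) (\<lambda>x. k1 (fst x) (snd x))"
    unfolding k1_def by (intro continuous_intros cPU cP1U) (use nzs in auto)
  have ck2: "continuous_on (U \<times> Ob) (\<lambda>x. k2 (fst x) (snd x))"
    unfolding k2_def by (intro continuous_intros cPU cP1U cP2U) (use nzs nz in auto)
  have cl: "closed S" using S(1) by (rule compact_imp_closed)
  have ckA: "continuous_on (U \<times> UNIV) (\<lambda>x. k (fst x) (snd x))"
    by (rule cont_zero_ext[OF U(1) Ob cl S(2) ck]) (use kout in auto)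
  have ck1A: "continuous_on (U \<times> UNIV) (\<lambda>x. k1 (fst x) (snd x))"
    by (rule cont_zero_ext[OF U(1) Ob cl S(2) ck1]) (use kout in auto)
  have ck2A: "continuous_on (U \<times> UNIV) (\<lambda>x. k2 (fst x) (snd x))"
    by (rule cont_zero_ext[OF U(1) Ob cl S(2) ck2]) (use kout in auto)
  have slice: "continuous_on UNIV (f e)" if "e \<in> U" "continuous_on (U \<times> UNIV) (\<lambda>x. f (fst x) (snd x))" for f e
  proof -
    have "continuous_on UNIV (\<lambda>p. (\<lambda>x. f (fst x) (snd x)) (e, p))"
      by (rule continuous_on_compose2[OF that(2)]) (use that(1) in \<open>auto intro!: continuous_intros\<close>)
    thus ?thesis by simp
  qed
  have dk: "((\<lambda>x. k x t) has_real_derivative k1 e t) (at e)" if "e \<in> U" for e t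
  proof (cases "t \<in> Ob")
    case True
    have "((\<lambda>x. sqrt (P x t) - sqrt (P 0 t)) has_real_derivative P1 e t / (2 * sqrt (P e t)) - 0) (at e)"
      by (intro DERIV_diff sqrt_deriv_gen dP posU that True DERIV_const)
    thus ?thesis by (simp add: k_def k1_def)
  next
    case False
    hence "t \<notin> S" using S(2) by auto
    thus ?thesis using kout by simp
  qed
  have dk1: "((\<lambda>x. k1 x t) has_real_derivative k2 e t) (at e)" if "e \<in> U" for e t
  proof (cases "t \<in> Ob")
    case True
    show ?thesis unfolding k1_def k2_def by (rule quot_deriv_gen[OF dP dP1 posU[OF that True]])
  next
    case False
    hence "t \<notin> S" using S(2) by auto
    thus ?thesis using kout by simp
  qed
  have ab: "U \<times> cbox a b \<subseteq> U \<times> UNIV" by auto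
  have cab1: "continuous_on (U \<times> cbox a b) (\<lambda>(x, t). k1 x t)"
    using continuous_on_subset[OF ck1A ab] by (simp add: case_prod_beta)
  have cab2: "continuous_on (U \<times> cbox a b) (\<lambda>(x, t). k2 x t)"
    using continuous_on_subset[OF ck2A ab] by (simp add: case_prod_beta)
  define G where "G e = integral (cbox a b) (k e)" for e
  define G1 where "G1 e = integral (cbox a b) (k1 e)" for e
  have dG: "(G has_real_derivative G1 e) (at e)" if "e \<in> U" for e
  proof -
    have "(G has_real_derivative G1 e) (at e within U)"
      unfolding G_def G1_def
    proof (rule leibniz_rule_field_derivative[OF _ _ cab1 that U(2)])
      show "\<And>x t. x \<in> U \<Longrightarrow> t \<in> cbox a b \<Longrightarrow> ((\<lambda>x. k x t) has_real_derivative k1 x t) (at x within U)"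
        using dk by (blast intro: has_field_derivative_at_within)
      show "\<And>x. x \<in> U \<Longrightarrow> k x integrable_on cbox a b"
        using slice[OF _ ckA] by (blast intro: integrable_continuous continuous_on_subset)
    qed
    thus ?thesis using at_within_open[OF that U(1)] by simp
  qed
  have dG1: "(G1 has_real_derivative integral (cbox a b) (k2 0)) (at 0)"
  proof -
    have "(G1 has_real_derivative integral (cbox a b) (k2 0)) (at 0 within U)"
      unfolding G1_def
    proof (rule leibniz_rule_field_derivative[OF _ _ cab2 U(3) U(2)])
      show "\<And>x t. x \<in> U \<Longrightarrow> t \<in> cbox a b \<Longrightarrow> ((\<lambda>x. k1 x t) has_real_derivative k2 x t) (at x within U)"
        using dk1 by (blast intro: has_field_derivative_at_within)
      show "\<And>x. x \<in> U \<Longrightarrow> k1 x integrable_on cbox a b"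
        using slice[OF _ ck1A] by (blast intro: integrable_continuous continuous_on_subset)
    qed
    thus ?thesis using at_within_open[OF U(3) U(1)] by simp
  qed
  define I0 where "I0 = integral B (\<lambda>p. sqrt (P 0 p))"
  define Fa where "Fa e = integral B (\<lambda>p. sqrt (P e p))" for e
  have eqF: "Fa e = I0 + G e" if "e \<in> U" for e
  proof -
    have ik: "k e integrable_on B"
      by (rule int_compact[OF B continuous_on_subset[OF slice[OF that ckA]]]) auto
    have "Fa e = integral B (\<lambda>p. sqrt (P 0 p) + k e p)" unfolding Fa_def k_def by simp
    also have "\<dots> = I0 + integral B (k e)" unfolding I0_def by (rule integral_add[OF i0 ik])
    also have "integral B (k e) = integral UNIV (k e)"
      by (rule integral_zero_outside[OF _ SB]) (use kout in auto)
    also have "\<dots> = integral (cbox a b) (k e)"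
      by (rule integral_zero_outside[symmetric, OF _ SC]) (use kout in auto)
    finally show ?thesis by (simp add: G_def)
  qed
  have dF: "(Fa has_real_derivative G1 e) (at e)" if "e \<in> U" for e
  proof -
    have "((\<lambda>e. I0 + G e) has_real_derivative 0 + G1 e) (at e)"
      by (intro DERIV_add DERIV_const dG that)
    hence "((\<lambda>e. I0 + G e) has_real_derivative G1 e) (at e)" by simp
    thus ?thesis by (rule has_field_derivative_transform_within_open[OF _ U(1) that]) (use eqF in auto)
  qed
  have dFe: "deriv Fa e = G1 e" if "e \<in> U" for e using DERIV_imp_deriv[OF dF[OF that]] .
  have "(deriv Fa has_real_derivative integral (cbox a b) (k2 0)) (at 0)"
    by (rule has_field_derivative_transform_within_open[OF dG1 U(1) U(3)]) (use dFe in auto)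
  hence "deriv (deriv Fa) 0 = integral (cbox a b) (k2 0)" by (rule DERIV_imp_deriv)
  also have "\<dots> = integral UNIV (k2 0)"
    by (rule integral_zero_outside[OF _ SC]) (use kout in auto)
  also have "\<dots> = integral B (k2 0)"
    by (rule integral_zero_outside[symmetric, OF _ SB]) (use kout in auto)
  finally show "deriv (deriv (\<lambda>e. integral B (\<lambda>p. sqrt (P e p)))) 0
           = integral B (\<lambda>p. P2 0 p / (2 * sqrt (P 0 p)) - (P1 0 p)\<^sup>2 / (4 * P 0 p * sqrt (P 0 p)))"
    unfolding Fa_def[abs_def] k2_def by simp
  show "(\<lambda>p. P2 0 p / (2 * sqrt (P 0 p)) - (P1 0 p)\<^sup>2 / (4 * P 0 p * sqrt (P 0 p))) integrable_on B"
    using int_compact[OF B continuous_on_subset[OF slice[OF U(3) ck2A]]] unfolding k2_def by auto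
qed




lemma line_component:
  fixes F :: "real^2 \<Rightarrow> real^'n"
  assumes "((\<lambda>t. F (p + t *\<^sub>R a)) has_vector_derivative d) (at 0)"
  shows "((\<lambda>t. F (p + t *\<^sub>R a) $ k) has_real_derivative d $ k) (at 0)"
  using bounded_linear.has_vector_derivative[OF bounded_linear_vec_nth assms]
  unfolding has_real_derivative_iff_has_vector_derivative .

lemma inner_lin: fixes A B V U :: "'a::real_inner"
  shows "(A + e *\<^sub>R V) \<bullet> (B + e *\<^sub>R U) = A \<bullet> B + e * (A \<bullet> U + V \<bullet> B) + e\<^sup>2 * (V \<bullet> U)"
  by (simp add: inner_add_left inner_add_right power2_eq_square algebra_simps)

lemma PP_expand:
  fixes A1 A2 V1 V2 :: "'a::real_inner"
  shows "((A1 + e *\<^sub>R V1) \<bullet> (A1 + e *\<^sub>R V1)) * ((A2 + e *\<^sub>R V2) \<bullet> (A2 + e *\<^sub>R V2))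
      - ((A1 + e *\<^sub>R V1) \<bullet> (A2 + e *\<^sub>R V2))\<^sup>2
    = Pr (A1 \<bullet> A1) (2 * (A1 \<bullet> V1)) (V1 \<bullet> V1) (A2 \<bullet> A2) (2 * (A2 \<bullet> V2)) (V2 \<bullet> V2)
         (A1 \<bullet> A2) (A1 \<bullet> V2 + V1 \<bullet> A2) (V1 \<bullet> V2) e"
  unfolding inner_lin Pr_def by (simp add: inner_commute[of V1 A1] inner_commute[of V2 A2] algebra_simps)

lemma q2_at0:
  fixes W E1 E2 G1 G2 F1 F2 :: real
  assumes W: "W > 0"
  shows "P2r W E1 E2 W G1 G2 0 F1 F2 0 / (2 * sqrt (Pr W E1 E2 W G1 G2 0 F1 F2 0))
     - (P1r W E1 E2 W G1 G2 0 F1 F2 0)\<^sup>2 / (4 * Pr W E1 E2 W G1 G2 0 F1 F2 0 * sqrt (Pr W E1 E2 W G1 G2 0 F1 F2 0))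
     = E2 + G2 - ((E1 - G1)\<^sup>2 + 4 * F1\<^sup>2) / (4 * W)"
proof -
  have P: "Pr W E1 E2 W G1 G2 0 F1 F2 0 = W * W" by (simp add: Pr_def)
  have s: "sqrt (W * W) = W" using W by simp
  show ?thesis unfolding P s using W
    by (simp add: P1r_def P2r_def field_simps power2_eq_square)
qed

lemma vd_cong:
  assumes "\<forall>\<^sub>F t in nhds 0. f t = g t"
  shows "vector_derivative f (at 0) = vector_derivative g (at 0)"
proof -
  have "(f has_vector_derivative f') (at 0 within UNIV) = (g has_vector_derivative f') (at 0 within UNIV)" for f'
    by (rule has_vector_derivative_cong_ev) (use assms eventually_nhds_x_imp_x[OF assms] in \<open>auto elim: eventually_mono\<close>)
  thus ?thesis unfolding vector_derivative_def by simp
qed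

lemma ball_cbox: "ball (0::real^2) 1 \<subseteq> cbox (- vec 1) (vec 1)"
proof
  fix x :: "real^2" assume "x \<in> ball 0 1"
  hence n: "norm x < 1" by simp
  show "x \<in> cbox (- vec 1) (vec 1)" unfolding mem_box_cart
  proof
    fix i show "(- vec 1) $ i \<le> x $ i \<and> x $ i \<le> (vec 1 :: real^2) $ i"
      using component_le_norm_cart[of x i] n by (auto simp: abs_le_iff)
  qed
qed

lemma cont_snd: "continuous_on Ob c \<Longrightarrow> continuous_on (UNIV \<times> Ob) (\<lambda>x. c (snd x))"
  by (rule continuous_on_compose2[OF _ continuous_on_snd]) auto

locale surf =
  fixes X :: "real^2 \<Rightarrow> real^'n" and N :: "nat \<Rightarrow> real^2 \<Rightarrow> real^'n"
  assumes CX: "Ck 3 Bdisc X" and conf: "conformal_immersion X"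
    and ON: "ON_normal_section X N" and tf: "torsion_free N" and card3: "CARD('n) \<ge> 3"
begin

abbreviation Bo :: "(real^2) set" where "Bo \<equiv> ball 0 1"

lemma Bo_sub: "Bo \<subseteq> Bdisc" by (auto simp: Bdisc_def)

lemma CX3: "Ck (Suc (Suc (Suc 0))) Bdisc X" using CX by (simp add: numeral_3_eq_3)
lemma CXo: "Ck (Suc (Suc (Suc 0))) Bo X" by (rule Ck_open_subset[OF CX3 Bo_sub open_ball])

lemma dX: "p \<in> Bo \<Longrightarrow> ((\<lambda>t. X (p + t *\<^sub>R axis i 1)) has_vector_derivative pd X i p) (at 0)"
  using Ck_Suc_open_pd(1)[OF open_ball CXo] by blast

lemma CpdX: "Ck (Suc (Suc 0)) Bo (pd X j)"
  by (rule Ck_Suc_open_pd(2)[OF open_ball CXo])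

lemma dpdX: "p \<in> Bo \<Longrightarrow> ((\<lambda>t. pd X j (p + t *\<^sub>R axis i 1)) has_vector_derivative pd (pd X j) i p) (at 0)"
  using Ck_Suc_open_pd(1)[OF open_ball CpdX] by blast

lemma cont_pdX: "continuous_on Bo (pd X j)"
  by (rule Ck_cont[OF CpdX])

lemma cont_pdpdX: "continuous_on Bo (pd (pd X j) i)"
  by (rule Ck_cont[OF Ck_Suc_open_pd(2)[OF open_ball CpdX]])

lemma CNo: assumes "\<sigma> < CARD('n) - 2" shows "Ck (Suc (Suc 0)) Bo (N \<sigma>)"
proof -
  have "Ck 2 Bdisc (N \<sigma>)" using ON assms by (simp add: ON_normal_section_def)
  hence "Ck (Suc (Suc 0)) Bdisc (N \<sigma>)" by (simp add: numeral_2_eq_2)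
  thus ?thesis by (rule Ck_open_subset[OF _ Bo_sub open_ball])
qed

lemma dN: "\<sigma> < CARD('n) - 2 \<Longrightarrow> p \<in> Bo \<Longrightarrow>
    ((\<lambda>t. N \<sigma> (p + t *\<^sub>R axis i 1)) has_vector_derivative pd (N \<sigma>) i p) (at 0)"
  using Ck_Suc_open_pd(1)[OF open_ball CNo] by blast

lemma cont_pdN: "\<sigma> < CARD('n) - 2 \<Longrightarrow> continuous_on Bo (pd (N \<sigma>) i)"
  by (rule Ck_cont[OF Ck_Suc_open_pd(2)[OF open_ball CNo]])

lemma cont_N: "\<sigma> < CARD('n) - 2 \<Longrightarrow> continuous_on Bo (N \<sigma>)"
  by (rule Ck_cont[OF CNo])

lemma pdB_X: "p \<in> Bo \<Longrightarrow> pdB Bdisc X i p = pd X i p"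
  by (rule pdB_Ck[OF CX3]) (simp add: interior_Bdisc)

lemma pdB_N: "\<sigma> < CARD('n) - 2 \<Longrightarrow> p \<in> Bo \<Longrightarrow> pdB Bdisc (N \<sigma>) i p = pd (N \<sigma>) i p"
proof -
  assume a: "\<sigma> < CARD('n) - 2" "p \<in> Bo"
  have "Ck 2 Bdisc (N \<sigma>)" using ON a by (simp add: ON_normal_section_def)
  hence "Ck (Suc (Suc 0)) Bdisc (N \<sigma>)" by (simp add: numeral_2_eq_2)
  thus ?thesis by (rule pdB_Ck) (use a in \<open>simp add: interior_Bdisc\<close>)
qed

lemma conf_o:
  assumes "p \<in> Bo"
  shows "pd X 1 p \<bullet> pd X 1 p = pd X 2 p \<bullet> pd X 2 p" "pd X 1 p \<bullet> pd X 2 p = 0" "pd X 1 p \<bullet> pd X 1 p > 0"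
proof -
  have pB: "p \<in> Bdisc" using assms Bo_sub by auto
  have "pdB Bdisc X 1 p \<bullet> pdB Bdisc X 1 p = pdB Bdisc X 2 p \<bullet> pdB Bdisc X 2 p \<and>
    pdB Bdisc X 1 p \<bullet> pdB Bdisc X 2 p = 0 \<and> pdB Bdisc X 1 p \<bullet> pdB Bdisc X 1 p > 0"
    using conf pB unfolding conformal_immersion_def by blast
  thus "pd X 1 p \<bullet> pd X 1 p = pd X 2 p \<bullet> pd X 2 p" "pd X 1 p \<bullet> pd X 2 p = 0" "pd X 1 p \<bullet> pd X 1 p > 0"
    unfolding pdB_X[OF assms] by auto
qed

lemma normal_o: "p \<in> Bo \<Longrightarrow> \<sigma> < CARD('n) - 2 \<Longrightarrow> pd X i p \<bullet> N \<sigma> p = 0"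
proof -
  assume a: "p \<in> Bo" "\<sigma> < CARD('n) - 2"
  have pB: "p \<in> Bdisc" using a Bo_sub by auto
  have "pdB Bdisc X i p \<bullet> N \<sigma> p = 0" using ON pB a(2) unfolding ON_normal_section_def by blast
  thus ?thesis unfolding pdB_X[OF a(1)] .
qed

lemma orth: "p \<in> Bdisc \<Longrightarrow> \<sigma> < CARD('n) - 2 \<Longrightarrow> \<omega> < CARD('n) - 2 \<Longrightarrow>
    N \<sigma> p \<bullet> N \<omega> p = (if \<sigma> = \<omega> then 1 else 0)"
  using ON unfolding ON_normal_section_def by auto

lemma tors_o: "p \<in> Bo \<Longrightarrow> \<sigma> < CARD('n) - 2 \<Longrightarrow> \<omega> < CARD('n) - 2 \<Longrightarrow> \<sigma> \<noteq> \<omega> \<Longrightarrow>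
    pd (N \<sigma>) i p \<bullet> N \<omega> p = 0"
proof -
  assume a: "p \<in> Bo" "\<sigma> < CARD('n) - 2" "\<omega> < CARD('n) - 2" "\<sigma> \<noteq> \<omega>"
  have pB: "p \<in> Bdisc" using a Bo_sub by auto
  have "pdB Bdisc (N \<sigma>) i p \<bullet> N \<omega> p = 0" using tf pB a(2-4) unfolding torsion_free_def torsion_def by blast
  thus ?thesis unfolding pdB_N[OF a(2,1)] .
qed

lemma sym_o:
  assumes p: "p \<in> Bo"
  shows "pd (pd X 1) 2 p = pd (pd X 2) 1 p"
proof (rule iffD2[OF vec_eq_iff], rule allI)
  fix k
  show "pd (pd X 1) 2 p $ k = pd (pd X 2) 1 p $ k"
  proof (rule clairaut_scalar[of Bo p "\<lambda>q. X q $ k" "axis 1 1" "\<lambda>q. pd X 1 q $ k" "axis 2 1"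
        "\<lambda>q. pd X 2 q $ k" "\<lambda>q. pd (pd X 1) 2 q $ k" "\<lambda>q. pd (pd X 2) 1 q $ k", OF open_ball p])
    show "\<And>q. q \<in> Bo \<Longrightarrow> ((\<lambda>t. X (q + t *\<^sub>R axis 1 1) $ k) has_real_derivative pd X 1 q $ k) (at 0)"
      by (rule line_component[OF dX])
    show "\<And>q. q \<in> Bo \<Longrightarrow> ((\<lambda>t. X (q + t *\<^sub>R axis 2 1) $ k) has_real_derivative pd X 2 q $ k) (at 0)"
      by (rule line_component[OF dX])
    show "\<And>q. q \<in> Bo \<Longrightarrow> ((\<lambda>t. pd X 1 (q + t *\<^sub>R axis 2 1) $ k) has_real_derivative pd (pd X 1) 2 q $ k) (at 0)"
      by (rule line_component[OF dpdX])
    show "\<And>q. q \<in> Bo \<Longrightarrow> ((\<lambda>t. pd X 2 (q + t *\<^sub>R axis 1 1) $ k) has_real_derivative pd (pd X 2) 1 q $ k) (at 0)"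
      by (rule line_component[OF dpdX])
    show "continuous_on Bo (\<lambda>q. pd (pd X 1) 2 q $ k)"
      by (rule continuous_on_component[OF cont_pdpdX])
    show "continuous_on Bo (\<lambda>q. pd (pd X 2) 1 q $ k)"
      by (rule continuous_on_component[OF cont_pdpdX])
  qed
qed

lemma Mm: assumes "p \<in> Bo" "\<sigma> < CARD('n) - 2" shows "N \<sigma> p \<bullet> pd (N \<sigma>) i p = 0"
proof -
  have "N \<sigma> p \<bullet> pd (N \<sigma>) i p + pd (N \<sigma>) i p \<bullet> N \<sigma> p = 0"
  proof (rule deriv_const_inner[OF dN[OF assms(2,1)] dN[OF assms(2,1)] open_ball assms(1)])
    show "\<And>q. q \<in> Bo \<Longrightarrow> N \<sigma> q \<bullet> N \<sigma> q = 1" using orth[of _ \<sigma> \<sigma>] assms(2) Bo_sub by auto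
  qed
  thus ?thesis by (simp add: inner_commute)
qed

lemma Am: assumes "p \<in> Bo" "\<sigma> < CARD('n) - 2"
  shows "pd X j p \<bullet> pd (N \<sigma>) i p = - Lcoef X N \<sigma> i j p"
proof -
  have "pd X j p \<bullet> pd (N \<sigma>) i p + pd (pd X j) i p \<bullet> N \<sigma> p = 0"
  proof (rule deriv_const_inner[OF dpdX[OF assms(1)] dN[OF assms(2,1)] open_ball assms(1)])
    show "\<And>q. q \<in> Bo \<Longrightarrow> pd X j q \<bullet> N \<sigma> q = 0" using normal_o assms(2) by auto
  qed
  thus ?thesis by (simp add: Lcoef_def)
qed

lemma mnorm: assumes p: "p \<in> Bo" and s: "\<sigma> < CARD('n) - 2"
  shows "pd (N \<sigma>) i p \<bullet> pd (N \<sigma>) i p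
     = ((Lcoef X N \<sigma> i 1 p)\<^sup>2 + (Lcoef X N \<sigma> i 2 p)\<^sup>2) / (pd X 1 p \<bullet> pd X 1 p)"
proof -
  have c: "CARD('n) = (CARD('n) - 2) + 2" using card3 by simp
  have "pd (N \<sigma>) i p \<bullet> pd (N \<sigma>) i p
     = ((pd (N \<sigma>) i p \<bullet> pd X 1 p)\<^sup>2 + (pd (N \<sigma>) i p \<bullet> pd X 2 p)\<^sup>2) / (pd X 1 p \<bullet> pd X 1 p)"
  proof (rule orth_decomp[OF c, where Nv = "\<lambda>\<omega>. N \<omega> p"])
    show "\<And>\<omega> \<omega>'. \<omega> < CARD('n) - 2 \<Longrightarrow> \<omega>' < CARD('n) - 2 \<Longrightarrow> N \<omega> p \<bullet> N \<omega>' p = (if \<omega> = \<omega>' then 1 else 0)"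
      using orth p Bo_sub by auto
    show "\<And>\<omega>. \<omega> < CARD('n) - 2 \<Longrightarrow> pd X 1 p \<bullet> N \<omega> p = 0" using normal_o p by auto
    show "\<And>\<omega>. \<omega> < CARD('n) - 2 \<Longrightarrow> pd X 2 p \<bullet> N \<omega> p = 0" using normal_o p by auto
    show "pd X 2 p \<bullet> pd X 2 p = pd X 1 p \<bullet> pd X 1 p" using conf_o[OF p] by simp
    show "pd X 1 p \<bullet> pd X 2 p = 0" using conf_o[OF p] by simp
    show "pd X 1 p \<bullet> pd X 1 p > 0" using conf_o[OF p] by simp
    show "\<And>\<omega>. \<omega> < CARD('n) - 2 \<Longrightarrow> pd (N \<sigma>) i p \<bullet> N \<omega> p = 0"
    proof -
      fix \<omega> assume w: "\<omega> < CARD('n) - 2"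
      show "pd (N \<sigma>) i p \<bullet> N \<omega> p = 0"
      proof (cases "\<omega> = \<sigma>")
        case True thus ?thesis using Mm[OF p s, of i] by (simp add: inner_commute)
      next
        case False thus ?thesis using tors_o[OF p s w] by simp
      qed
    qed
  qed simp
  also have "pd (N \<sigma>) i p \<bullet> pd X 1 p = - Lcoef X N \<sigma> i 1 p" using Am[OF p s, of 1 i] by (metis inner_commute)
  also have "pd (N \<sigma>) i p \<bullet> pd X 2 p = - Lcoef X N \<sigma> i 2 p" using Am[OF p s, of 2 i] by (metis inner_commute)
  finally show ?thesis by simp
qed

end


locale var = surf X N for X :: "real^2 \<Rightarrow> real^'n" and N :: "nat \<Rightarrow> real^2 \<Rightarrow> real^'n" +
  fixes \<phi> :: "real^2 \<Rightarrow> real" and \<sigma> :: nat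
  assumes phi: "C0inf \<phi>" and sig: "\<sigma> < CARD('n) - 2"
begin

definition Sp where "Sp = closure {p. \<phi> p \<noteq> 0}"

lemma Sp: "compact Sp" "Sp \<subseteq> Bo" using phi by (auto simp: C0inf_def Sp_def)

lemma phi1: "Ck (Suc 0) UNIV \<phi>" using phi by (auto simp: C0inf_def)

lemma dphi: "((\<lambda>t. \<phi> (p + t *\<^sub>R axis i 1)) has_vector_derivative pd \<phi> i p) (at 0)"
  using Ck_Suc_open_pd(1)[OF open_UNIV phi1] by blast

lemma dphiR: "((\<lambda>t. \<phi> (p + t *\<^sub>R axis i 1)) has_real_derivative pd \<phi> i p) (at 0)"
  using dphi unfolding has_real_derivative_iff_has_vector_derivative .

lemma cont_pdphi: "continuous_on UNIV (pd \<phi> i)"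
  by (rule Ck_cont[OF Ck_Suc_open_pd(2)[OF open_UNIV phi1]])

lemma cont_phi: "continuous_on UNIV \<phi>" by (rule Ck_cont[OF phi1])

lemma phi_out: "p \<notin> Sp \<Longrightarrow> \<phi> p = 0"
  using closure_subset[of "{p. \<phi> p \<noteq> 0}"] by (auto simp: Sp_def)

lemma open_nSp: "open (- Sp)" using Sp(1) compact_imp_closed by blast

lemma pdphi_out: assumes "p \<notin> Sp" shows "pd \<phi> i p = 0"
proof -
  have "((\<lambda>t. (\<lambda>_. 0::real) (p + t *\<^sub>R axis i 1)) has_vector_derivative 0) (at 0)" by simp
  hence "((\<lambda>t. \<phi> (p + t *\<^sub>R axis i 1)) has_vector_derivative 0) (at 0)"
    by (rule line_transform[OF _ open_nSp]) (use assms phi_out in auto)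
  thus ?thesis by (rule pd_eqI)
qed

definition V where
  "V i p = pd \<phi> i p *\<^sub>R N \<sigma> p + \<phi> p *\<^sub>R pd (N \<sigma>) i p"

lemma V_out: "p \<notin> Sp \<Longrightarrow> V i p = 0"
  by (simp add: V_def phi_out pdphi_out)

lemma cont_V: "continuous_on Bo (V i)"
  unfolding V_def
  by (intro continuous_intros continuous_on_subset[OF cont_pdphi] continuous_on_subset[OF cont_phi]
      cont_N[OF sig] cont_pdN[OF sig]) auto

lemma pdY: "pd (\<lambda>p. X p + (\<epsilon> * \<phi> p) *\<^sub>R N \<sigma> p) i p = pd X i p + \<epsilon> *\<^sub>R V i p"
proof (cases "p \<in> Bo")
  case True
  have "((\<lambda>t. X (p + t *\<^sub>R axis i 1) + (\<epsilon> * \<phi> (p + t *\<^sub>R axis i 1)) *\<^sub>R N \<sigma> (p + t *\<^sub>R axis i 1))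
     has_vector_derivative pd X i p + ((\<epsilon> * \<phi> (p + 0 *\<^sub>R axis i 1)) *\<^sub>R pd (N \<sigma>) i p
        + (\<epsilon> * pd \<phi> i p) *\<^sub>R N \<sigma> (p + 0 *\<^sub>R axis i 1))) (at 0)"
    by (intro has_vector_derivative_add dX[OF True] has_vector_derivative_scaleR DERIV_cmult dphiR dN[OF sig True])
  hence "pd (\<lambda>p. X p + (\<epsilon> * \<phi> p) *\<^sub>R N \<sigma> p) i p = pd X i p + ((\<epsilon> * \<phi> (p + 0 *\<^sub>R axis i 1)) *\<^sub>R pd (N \<sigma>) i p
        + (\<epsilon> * pd \<phi> i p) *\<^sub>R N \<sigma> (p + 0 *\<^sub>R axis i 1))"
    by (rule pd_eqI)
  thus ?thesis by (simp add: V_def scaleR_add_right)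
next
  case False
  hence nS: "p \<notin> Sp" using Sp(2) by auto
  have "\<forall>\<^sub>F t in nhds 0. t \<in> {t. p + t *\<^sub>R axis i 1 \<in> - Sp}"
    by (rule eventually_nhds_in_open[OF open_line[OF open_nSp]]) (use nS in simp)
  hence ev: "\<forall>\<^sub>F t in nhds 0. p + t *\<^sub>R axis i 1 \<in> - Sp" by simp
  have "\<forall>\<^sub>F t in nhds 0. X (p + t *\<^sub>R axis i 1) + (\<epsilon> * \<phi> (p + t *\<^sub>R axis i 1)) *\<^sub>R N \<sigma> (p + t *\<^sub>R axis i 1)
      = X (p + t *\<^sub>R axis i 1)"
    by (rule eventually_mono[OF ev]) (simp add: phi_out)
  hence "pd (\<lambda>p. X p + (\<epsilon> * \<phi> p) *\<^sub>R N \<sigma> p) i p = pd X i p"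
    unfolding pd_def by (rule vd_cong)
  thus ?thesis using V_out[OF nS] by simp
qed

end




context var
begin

definition PP where "PP e p = Pr (pd X 1 p \<bullet> pd X 1 p) (2 * (pd X 1 p \<bullet> V 1 p)) (V 1 p \<bullet> V 1 p)
   (pd X 2 p \<bullet> pd X 2 p) (2 * (pd X 2 p \<bullet> V 2 p)) (V 2 p \<bullet> V 2 p)
   (pd X 1 p \<bullet> pd X 2 p) (pd X 1 p \<bullet> V 2 p + V 1 p \<bullet> pd X 2 p) (V 1 p \<bullet> V 2 p) e"
definition PP1 where "PP1 e p = P1r (pd X 1 p \<bullet> pd X 1 p) (2 * (pd X 1 p \<bullet> V 1 p)) (V 1 p \<bullet> V 1 p)
   (pd X 2 p \<bullet> pd X 2 p) (2 * (pd X 2 p \<bullet> V 2 p)) (V 2 p \<bullet> V 2 p)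
   (pd X 1 p \<bullet> pd X 2 p) (pd X 1 p \<bullet> V 2 p + V 1 p \<bullet> pd X 2 p) (V 1 p \<bullet> V 2 p) e"
definition PP2 where "PP2 e p = P2r (pd X 1 p \<bullet> pd X 1 p) (2 * (pd X 1 p \<bullet> V 1 p)) (V 1 p \<bullet> V 1 p)
   (pd X 2 p \<bullet> pd X 2 p) (2 * (pd X 2 p \<bullet> V 2 p)) (V 2 p \<bullet> V 2 p)
   (pd X 1 p \<bullet> pd X 2 p) (pd X 1 p \<bullet> V 2 p + V 1 p \<bullet> pd X 2 p) (V 1 p \<bullet> V 2 p) e"

lemma area_eq: "area (\<lambda>p. X p + (\<epsilon> * \<phi> p) *\<^sub>R N \<sigma> p) = integral Bdisc (\<lambda>p. sqrt (PP \<epsilon> p))"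
  unfolding area_def pdY PP_expand PP_def ..

lemma dPP: "((\<lambda>e. PP e p) has_real_derivative PP1 e p) (at e)"
  unfolding PP_def PP1_def by (rule Pr_deriv)

lemma dPP1: "((\<lambda>e. PP1 e p) has_real_derivative PP2 e p) (at e)"
  unfolding PP1_def PP2_def by (rule P1r_deriv)

lemma cPP: "continuous_on (UNIV \<times> Bo) (\<lambda>x. PP (fst x) (snd x))"
  unfolding PP_def Pr_def
  by (intro continuous_intros cont_snd[OF cont_pdX] cont_snd[OF cont_V])

lemma cPP1: "continuous_on (UNIV \<times> Bo) (\<lambda>x. PP1 (fst x) (snd x))"
  unfolding PP1_def P1r_def
  by (intro continuous_intros cont_snd[OF cont_pdX] cont_snd[OF cont_V])

lemma cPP2: "continuous_on (UNIV \<times> Bo) (\<lambda>x. PP2 (fst x) (snd x))"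
  unfolding PP2_def P2r_def
  by (intro continuous_intros cont_snd[OF cont_pdX] cont_snd[OF cont_V])

lemma PP_out: "p \<notin> Sp \<Longrightarrow> PP e p = PP 0 p \<and> PP1 e p = 0 \<and> PP2 e p = 0"
  by (simp add: PP_def PP1_def PP2_def V_out Pr_def P1r_def P2r_def)

lemma PP_pos: assumes "p \<in> Bo" shows "PP 0 p > 0"
proof -
  have "PP 0 p = (pd X 1 p \<bullet> pd X 1 p) * (pd X 1 p \<bullet> pd X 1 p)"
    using conf_o[OF assms] by (simp add: PP_def Pr_def)
  thus ?thesis using conf_o(3)[OF assms] by simp
qed

lemma PP_i0: "(\<lambda>p. sqrt (PP 0 p)) integrable_on Bdisc"
proof -
  from CX3 obtain g where g: "\<forall>i. Ck (Suc (Suc 0)) Bdisc (g i)"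
    "\<forall>p\<in>interior Bdisc. \<forall>i. ((\<lambda>t. X (p + t *\<^sub>R axis i 1)) has_vector_derivative g i p) (at 0)"
    by auto
  have cg: "continuous_on Bdisc (g 1)" by (rule Ck_cont[of "Suc (Suc 0)"]) (use g(1) in blast)
  have "(\<lambda>p. g 1 p \<bullet> g 1 p) integrable_on Bdisc"
    by (rule int_compact) (auto simp: Bdisc_def intro!: continuous_intros cg[unfolded Bdisc_def])
  moreover have "sqrt (PP 0 p) = g 1 p \<bullet> g 1 p" if "p \<in> Bdisc - sphere 0 1" for p
  proof -
    have p: "p \<in> Bo" using that by (auto simp: Bdisc_def)
    have e: "pd X 1 p = g 1 p" by (rule pd_eqI) (use g(2) p in \<open>auto simp: interior_Bdisc\<close>)
    have "PP 0 p = (pd X 1 p \<bullet> pd X 1 p) * (pd X 1 p \<bullet> pd X 1 p)"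
      using conf_o[OF p] by (simp add: PP_def Pr_def)
    hence "sqrt (PP 0 p) = pd X 1 p \<bullet> pd X 1 p" using conf_o(3)[OF p] by simp
    thus ?thesis using e by simp
  qed
  ultimately show ?thesis by (rule integrable_spike[OF _ negligible_sphere])
qed

lemma SpB: "Sp \<subseteq> Bdisc" using Sp(2) Bo_sub by blast
lemma SpC: "Sp \<subseteq> cbox (- vec 1) (vec 1)" using Sp(2) ball_cbox by blast
lemma compactB: "compact Bdisc" by (simp add: Bdisc_def)

lemmas SD = second_deriv_integral[OF open_ball Sp(1) Sp(2) SpB SpC compactB dPP dPP1 cPP cPP1 cPP2 PP_out PP_pos PP_i0]


definition Rs where "Rs p = gradsq \<phi> p + 2 * (\<phi> p)\<^sup>2 *
   (Lcoef X N \<sigma> 1 1 p * Lcoef X N \<sigma> 2 2 p - (Lcoef X N \<sigma> 1 2 p)\<^sup>2) / Wf X p"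

lemma q2_eq: "PP2 0 p / (2 * sqrt (PP 0 p)) - (PP1 0 p)\<^sup>2 / (4 * PP 0 p * sqrt (PP 0 p)) = Rs p"
proof (cases "p \<in> Bo")
  case False
  hence nS: "p \<notin> Sp" using Sp(2) by auto
  have "PP1 0 p = 0" "PP2 0 p = 0" using PP_out[OF nS, of 0] by auto
  moreover have "Rs p = 0" using nS by (simp add: Rs_def gradsq_def pdphi_out phi_out)
  ultimately show ?thesis by simp
next
  case True
  note p = True
  define W where "W = pd X 1 p \<bullet> pd X 1 p"
  have W: "W > 0" using conf_o(3)[OF p] by (simp add: W_def)
  have c1: "pd X 2 p \<bullet> pd X 2 p = W" using conf_o(1)[OF p] by (simp add: W_def)
  have c2: "pd X 1 p \<bullet> pd X 2 p = 0" using conf_o(2)[OF p] .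
  define L11 where "L11 = Lcoef X N \<sigma> 1 1 p"
  define L12 where "L12 = Lcoef X N \<sigma> 1 2 p"
  define L22 where "L22 = Lcoef X N \<sigma> 2 2 p"
  have L21: "Lcoef X N \<sigma> 2 1 p = L12" using sym_o[OF p] by (simp add: L12_def Lcoef_def)
  have nA: "pd X j p \<bullet> N \<sigma> p = 0" "N \<sigma> p \<bullet> pd X j p = 0" for j
    using normal_o[OF p sig] by (auto simp: inner_commute)
  have Am': "pd X j p \<bullet> pd (N \<sigma>) i p = - Lcoef X N \<sigma> i j p" "pd (N \<sigma>) i p \<bullet> pd X j p = - Lcoef X N \<sigma> i j p" for i j
    using Am[OF p sig] by (auto simp: inner_commute)
  have MM: "N \<sigma> p \<bullet> N \<sigma> p = 1" using orth[of p \<sigma> \<sigma>] sig p Bo_sub by auto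
  have Mm': "N \<sigma> p \<bullet> pd (N \<sigma>) i p = 0" "pd (N \<sigma>) i p \<bullet> N \<sigma> p = 0" for i
    using Mm[OF p sig] by (auto simp: inner_commute)
  have mm: "pd (N \<sigma>) i p \<bullet> pd (N \<sigma>) i p = ((Lcoef X N \<sigma> i 1 p)\<^sup>2 + (Lcoef X N \<sigma> i 2 p)\<^sup>2) / W" for i
    using mnorm[OF p sig] by (simp add: W_def)
  have h1: "pd X 1 p \<bullet> V 1 p = - \<phi> p * L11"
    by (simp add: V_def inner_add_right nA Am' L11_def)
  have h2: "pd X 2 p \<bullet> V 2 p = - \<phi> p * L22"
    by (simp add: V_def inner_add_right nA Am' L22_def)
  have h3: "pd X 1 p \<bullet> V 2 p + V 1 p \<bullet> pd X 2 p = - 2 * \<phi> p * L12"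
    by (simp add: V_def inner_add_right inner_add_left nA Am' L21 L12_def)
  have h4: "V i p \<bullet> V i p = (pd \<phi> i p)\<^sup>2 + (\<phi> p)\<^sup>2 * ((Lcoef X N \<sigma> i 1 p)\<^sup>2 + (Lcoef X N \<sigma> i 2 p)\<^sup>2) / W" for i
    by (simp add: V_def inner_add_right inner_add_left MM Mm' mm power2_eq_square)
  have "PP2 0 p / (2 * sqrt (PP 0 p)) - (PP1 0 p)\<^sup>2 / (4 * PP 0 p * sqrt (PP 0 p))
     = V 1 p \<bullet> V 1 p + V 2 p \<bullet> V 2 p
       - ((2 * (pd X 1 p \<bullet> V 1 p) - 2 * (pd X 2 p \<bullet> V 2 p))\<^sup>2 + 4 * (pd X 1 p \<bullet> V 2 p + V 1 p \<bullet> pd X 2 p)\<^sup>2) / (4 * W)"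
    unfolding PP_def PP1_def PP2_def c1 c2 W_def[symmetric] by (rule q2_at0[OF W])
  also have "\<dots> = Rs p"
    unfolding h1 h2 h3 h4 Rs_def gradsq_def Wf_def W_def[symmetric] L21 L11_def[symmetric] L12_def[symmetric] L22_def[symmetric]
    using W by (simp add: field_simps power2_eq_square)
  finally show ?thesis .
qed

lemma second_var:
  shows "deriv (deriv (\<lambda>\<epsilon>. area (\<lambda>p. X p + (\<epsilon> * \<phi> p) *\<^sub>R N \<sigma> p))) 0 = integral Bdisc Rs"
    and "Rs integrable_on Bdisc"
proof -
  have "(\<lambda>\<epsilon>. area (\<lambda>p. X p + (\<epsilon> * \<phi> p) *\<^sub>R N \<sigma> p)) = (\<lambda>e. integral Bdisc (\<lambda>p. sqrt (PP e p)))"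
    using area_eq by auto
  moreover have "(\<lambda>p. PP2 0 p / (2 * sqrt (PP 0 p)) - (PP1 0 p)\<^sup>2 / (4 * PP 0 p * sqrt (PP 0 p))) = Rs"
    using q2_eq by auto
  ultimately show "deriv (deriv (\<lambda>\<epsilon>. area (\<lambda>p. X p + (\<epsilon> * \<phi> p) *\<^sub>R N \<sigma> p))) 0 = integral Bdisc Rs"
    and "Rs integrable_on Bdisc" using SD by auto
qed

end




theorem mainTheorem4:
  fixes X :: "real^2 \<Rightarrow> real^'n"
    and N :: "nat \<Rightarrow> real^2 \<Rightarrow> real^'n"
  assumes "CARD('n) \<ge> 3"
    and "Ck 3 Bdisc X"
    and "conformal_immersion X"
    and "ON_normal_section X N"
    and "torsion_free N"
    and "minimal_wrt X N"
    and "stable X"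
  shows "\<forall>\<mu>::real. 0 < \<mu> \<and> \<mu> \<le> 2 / (real CARD('n) - 2) \<longrightarrow>
           (\<forall>\<phi>. C0inf \<phi> \<longrightarrow>
              integral Bdisc (gradsq \<phi>)
                \<ge> \<mu> * integral Bdisc (\<lambda>p. (- gauss_curv X N p) * Wf X p * (\<phi> p)\<^sup>2))"
proof (intro allI impI)
  fix \<mu> :: real and \<phi> :: "real^2 \<Rightarrow> real"
  assume mu: "0 < \<mu> \<and> \<mu> \<le> 2 / (real CARD('n) - 2)" and phi: "C0inf \<phi>"
  have su: "surf X N" using assms unfolding surf_def by auto
  interpret surf X N by (rule su)
  define m where "m = CARD('n) - 2"
  have m1: "m \<ge> 1" using assms(1) by (simp add: m_def)
  have rm: "real CARD('n) - 2 = real m" using assms(1) by (simp add: m_def of_nat_diff)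
  have va: "var X N \<phi> \<sigma>" if "\<sigma> < m" for \<sigma>
    using su phi that unfolding var_def var_axioms_def m_def by auto
  define T where "T p = (- gauss_curv X N p) * Wf X p * (\<phi> p)\<^sup>2" for p
  define I where "I \<sigma> = integral Bdisc (var.Rs X N \<phi> \<sigma>)" for \<sigma>
  have Ipos: "I \<sigma> \<ge> 0" if "\<sigma> < m" for \<sigma>
  proof -
    have "deriv (deriv (\<lambda>\<epsilon>. area (\<lambda>p. X p + (\<epsilon> * \<phi> p) *\<^sub>R N \<sigma> p))) 0 \<ge> 0"
    proof -
      have "Ck 2 Bdisc (N \<sigma>)" using assms(4) that by (simp add: ON_normal_section_def m_def)
      moreover have "\<forall>p\<in>Bdisc. N \<sigma> p \<bullet> N \<sigma> p = 1 \<and> (\<forall>i. pdB Bdisc X i p \<bullet> N \<sigma> p = 0)"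
        using assms(4) that by (simp add: ON_normal_section_def m_def)
      ultimately show ?thesis using assms(7) phi unfolding stable_def by blast
    qed
    thus ?thesis unfolding I_def var.second_var(1)[OF va[OF that]] .
  qed
  have intRs: "var.Rs X N \<phi> \<sigma> integrable_on Bdisc" if "\<sigma> < m" for \<sigma>
    by (rule var.second_var(2)[OF va[OF that]])
  have phiC: "Ck (Suc 0) UNIV \<phi>" using phi by (auto simp: C0inf_def)
  have cg: "continuous_on UNIV (pd \<phi> i)" for i
    by (rule Ck_cont[OF Ck_Suc_open_pd(2)[OF open_UNIV phiC]])
  have intG: "gradsq \<phi> integrable_on Bdisc"
    unfolding gradsq_def[abs_def]
    by (rule int_compact) (auto simp: Bdisc_def intro!: continuous_intros continuous_on_subset[OF cg])
  define a where "a \<sigma> p = Lcoef X N \<sigma> 1 1 p * Lcoef X N \<sigma> 2 2 p - (Lcoef X N \<sigma> 1 2 p)\<^sup>2" for \<sigma> p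
  have gk: "gauss_curv X N p = (\<Sum>\<sigma><m. a \<sigma> p) / (Wf X p)\<^sup>2" for p
    unfolding gauss_curv_def a_def m_def ..
  have sumR: "(\<Sum>\<sigma><m. var.Rs X N \<phi> \<sigma> p) = real m * gradsq \<phi> p - 2 * T p" for p
  proof -
    have Rs: "var.Rs X N \<phi> \<sigma> p = gradsq \<phi> p + 2 * (\<phi> p)\<^sup>2 * a \<sigma> p / Wf X p" if "\<sigma> < m" for \<sigma>
      using var.Rs_def[OF va[OF that]] by (simp add: a_def)
    have "(\<Sum>\<sigma><m. var.Rs X N \<phi> \<sigma> p) = (\<Sum>\<sigma><m. gradsq \<phi> p + 2 * (\<phi> p)\<^sup>2 * a \<sigma> p / Wf X p)"
      using Rs by simp
    also have "\<dots> = real m * gradsq \<phi> p + 2 * (\<phi> p)\<^sup>2 * (\<Sum>\<sigma><m. a \<sigma> p) / Wf X p"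
      by (simp add: sum.distrib sum_divide_distrib[symmetric] sum_distrib_left[symmetric])
    also have "\<dots> = real m * gradsq \<phi> p - 2 * T p"
    proof (cases "Wf X p = 0")
      case True thus ?thesis by (simp add: T_def)
    next
      case False thus ?thesis
        by (simp add: T_def gk field_simps power2_eq_square)
    qed
    finally show ?thesis .
  qed
  have intSum: "(\<lambda>p. \<Sum>\<sigma><m. var.Rs X N \<phi> \<sigma> p) integrable_on Bdisc"
    by (rule integrable_sum) (use intRs in auto)
  have intSum_eq: "integral Bdisc (\<lambda>p. \<Sum>\<sigma><m. var.Rs X N \<phi> \<sigma> p) = (\<Sum>\<sigma><m. I \<sigma>)"
    unfolding I_def by (rule integral_sum) (use intRs in auto)
  have Teq: "T p = (real m * gradsq \<phi> p - (\<Sum>\<sigma><m. var.Rs X N \<phi> \<sigma> p)) / 2" for p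
    using sumR[of p] by simp
  have intT: "T integrable_on Bdisc"
  proof -
    have i1: "(\<lambda>p. real m * gradsq \<phi> p) integrable_on Bdisc"
      using integrable_on_cmult_left[OF intG, of "real m"] by simp
    have i2: "(\<lambda>p. real m * gradsq \<phi> p - (\<Sum>\<sigma><m. var.Rs X N \<phi> \<sigma> p)) integrable_on Bdisc"
      by (rule integrable_diff[OF i1 intSum])
    have i3: "(\<lambda>p. of_real (1/2) * (real m * gradsq \<phi> p - (\<Sum>\<sigma><m. var.Rs X N \<phi> \<sigma> p))) integrable_on Bdisc"
      by (rule integrable_on_cmult_left[OF i2])
    have eqT: "(\<lambda>p. of_real (1/2) * (real m * gradsq \<phi> p - (\<Sum>\<sigma><m. var.Rs X N \<phi> \<sigma> p))) = T"
      using Teq by (auto simp: fun_eq_iff)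
    show ?thesis using i3 unfolding eqT .
  qed
  have "integral Bdisc (\<lambda>p. \<Sum>\<sigma><m. var.Rs X N \<phi> \<sigma> p) = integral Bdisc (\<lambda>p. real m * gradsq \<phi> p - 2 * T p)"
    using sumR by simp
  also have "\<dots> = integral Bdisc (\<lambda>p. real m * gradsq \<phi> p) - integral Bdisc (\<lambda>p. 2 * T p)"
  proof (rule integral_diff)
    show "(\<lambda>p. real m * gradsq \<phi> p) integrable_on Bdisc"
      using integrable_on_cmult_left[OF intG, of "real m"] by simp
    show "(\<lambda>p. 2 * T p) integrable_on Bdisc"
      using integrable_on_cmult_left[OF intT, of 2] by simp
  qed
  also have "\<dots> = real m * integral Bdisc (gradsq \<phi>) - 2 * integral Bdisc T"
    by (simp add: integral_mult_right)
  finally have key: "real m * integral Bdisc (gradsq \<phi>) - 2 * integral Bdisc T = (\<Sum>\<sigma><m. I \<sigma>)"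
    using intSum_eq by simp
  have "(\<Sum>\<sigma><m. I \<sigma>) \<ge> 0" using Ipos by (intro sum_nonneg) auto
  hence k2: "2 * integral Bdisc T \<le> real m * integral Bdisc (gradsq \<phi>)" using key by simp
  have Tnn: "T p \<ge> 0" if "p \<in> Bdisc" for p
  proof (cases "p \<in> Bo")
    case False
    have "closure {p. \<phi> p \<noteq> 0} \<subseteq> Bo" using phi by (simp add: C0inf_def)
    hence "\<phi> p = 0" using False closure_subset[of "{p. \<phi> p \<noteq> 0}"] by auto
    thus ?thesis by (simp add: T_def)
  next
    case True
    have W: "Wf X p > 0" using conf_o(3)[OF True] by (simp add: Wf_def)
    have "a \<sigma> p \<le> 0" if "\<sigma> < m" for \<sigma>
    proof -
      have "Lcoef X N \<sigma> 2 2 p = - Lcoef X N \<sigma> 1 1 p"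
        using assms(6) True that unfolding minimal_wrt_def m_def by (simp add: eq_neg_iff_add_eq_0 add.commute)
      thus ?thesis by (simp add: a_def power2_eq_square)
    qed
    hence "(\<Sum>\<sigma><m. a \<sigma> p) \<le> 0" by (intro sum_nonpos) auto
    hence "gauss_curv X N p \<le> 0" unfolding gk using W
      by (simp add: divide_nonpos_pos)
    hence "gauss_curv X N p * Wf X p \<le> 0" using W by (simp add: mult_nonpos_nonneg)
    hence "gauss_curv X N p * Wf X p * (\<phi> p)\<^sup>2 \<le> 0" by (simp add: mult_nonpos_nonneg)
    thus ?thesis by (simp add: T_def)
  qed
  have ITnn: "integral Bdisc T \<ge> 0" by (rule integral_nonneg[OF intT Tnn])
  have mu2: "\<mu> \<le> 2 / real m" using mu rm by simp
  have "\<mu> * integral Bdisc T \<le> (2 / real m) * integral Bdisc T"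
    using mu2 ITnn by (rule mult_right_mono)
  also have "\<dots> \<le> integral Bdisc (gradsq \<phi>)" using k2 m1 by (simp add: field_simps)
  finally show "integral Bdisc (gradsq \<phi>) \<ge> \<mu> * integral Bdisc (\<lambda>p. (- gauss_curv X N p) * Wf X p * (\<phi> p)\<^sup>2)"
    by (simp add: T_def[abs_def])
qed


end
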